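(* Let $N\ge2$, $d\ge2$, and consider gates on $(\mathbb{C}^d)^{\otimes N}$. Then $$\langle\varepsilon_\tau\rangle_{O(d^N)}=\frac{[2^N(d^N+1)-2(d+1)^N][d^N(d+1)^N-2^N]}{(2^{N-1}-1)(d^{2N}+d^N-2)(d+1)^N}$$ and $$\langle\varepsilon_\tau\rangle_{U(d^N)}=\frac{2^N(d^N+1)-2(d+1)^N}{(2^{N-1}-1)(d^N+1)}.$$
   Context: For a pure state $|\psi\rangle$ on $(\mathbb{C}^d)^{\otimes N}$ and an unordered bipartition $A|B$ of the $N$ parties into disjoint nonempty sets, $\tau_{A|B}(|\psi\rangle)=2\big(1-\mathrm{Tr}(\mathrm{Tr}_B|\psi\rangle\langle\psi|)^2\big)$; the one-tangle is $\tau_1=\frac{1}{2^{N-1}-1}\sum_{A|B}\tau_{A|B}$, summed over all $2^{N-1}-1$ unordered bipartitions. The entangling power of a unitary $U$ is $\varepsilon_\tau(U)=\langle\tau_1(U|\psi_1\rangle\cdots|\psi_N\rangle)\rangle$, averaged over product states with each $|\psi_i\rangle$ uniform on the unit sphere of $\mathbb{C}^d$. $\langle\cdot\rangle_{O(d^N)}$, $\langle\cdot\rangle_{U(d^N)}$ denote Haar averages over the orthogonal and unitary groups of size $d^N$. *)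

theory Defs
  imports "HOL-Probability.Probability"
begin

definition cadj :: "complex^'n^'m \<Rightarrow> complex^'m^'n" where
  "cadj A = (\<chi> i j. cnj (A $ j $ i))"

definition unitary_mat :: "complex^'n^'n \<Rightarrow> bool" where
  "unitary_mat U \<longleftrightarrow> U ** cadj U = mat 1 \<and> cadj U ** U = mat 1"

definition cmat :: "real^'n^'m \<Rightarrow> complex^'n^'m" where
  "cmat Q = (\<chi> i j. complex_of_real (Q $ i $ j))"

text \<open>Haar probability measure on the unitary group U(n) (characterised by being a
  left-invariant Borel probability measure concentrated on U(n); unique).\<close>
definition is_haar_unitary :: "(complex^'n^'n) measure \<Rightarrow> bool" where
  "is_haar_unitary M \<longleftrightarrow> prob_space M \<and> sets M = sets borel \<and>
     (AE U in M. unitary_mat U) \<and>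
     (\<forall>V. unitary_mat V \<longrightarrow> distr M borel (\<lambda>U. V ** U) = M)"

definition is_haar_orth :: "(real^'n^'n) measure \<Rightarrow> bool" where
  "is_haar_orth M \<longleftrightarrow> prob_space M \<and> sets M = sets borel \<and>
     (AE Q in M. orthogonal_matrix Q) \<and>
     (\<forall>V. orthogonal_matrix V \<longrightarrow> distr M borel (\<lambda>Q. V ** Q) = M)"

text \<open>Uniform probability measure on the unit sphere of C^d (the unique unitarily
  invariant Borel probability measure on the sphere).\<close>
definition is_unif_sphere :: "(complex^'d) measure \<Rightarrow> bool" where
  "is_unif_sphere S \<longleftrightarrow> prob_space S \<and> sets S = sets borel \<and>
     (AE x in S. norm x = 1) \<and>
     (\<forall>V. unitary_mat V \<longrightarrow> distr S borel (\<lambda>x. V *v x) = S)"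

text \<open>Parties are indexed by the finite type 'i (N = CARD('i)), local basis by 'd
  (d = CARD('d)); computational basis of the N-partite space is 'i \<Rightarrow> 'd.\<close>
definition prod_state :: "('i::finite \<Rightarrow> complex^'d::finite) \<Rightarrow> complex^('i \<Rightarrow> 'd)" where
  "prod_state \<phi> = (\<chi> x. \<Prod>i\<in>UNIV. \<phi> i $ x i)"

definition merge :: "'i set \<Rightarrow> ('i \<Rightarrow> 'd) \<Rightarrow> ('i \<Rightarrow> 'd) \<Rightarrow> ('i \<Rightarrow> 'd)" where
  "merge A x y = (\<lambda>i. if i \<in> A then x i else y i)"

text \<open>Tr(rho_A^2) with rho_A = Tr_B |psi><psi|, B = complement of A.
  rho_A(a,a') = sum_b psi(a b) cnj(psi(a' b)).\<close>
definition purity :: "'i::finite set \<Rightarrow> complex^('i \<Rightarrow> 'd::finite) \<Rightarrow> complex" where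
  "purity A \<psi> =
    (\<Sum>a\<in>PiE A (\<lambda>_. UNIV). \<Sum>a'\<in>PiE A (\<lambda>_. UNIV).
       (\<Sum>b\<in>PiE (- A) (\<lambda>_. UNIV). \<psi> $ merge A a b * cnj (\<psi> $ merge A a' b)) *
       (\<Sum>b\<in>PiE (- A) (\<lambda>_. UNIV). \<psi> $ merge A a' b * cnj (\<psi> $ merge A a b)))"

definition tau_bip :: "'i::finite set \<Rightarrow> complex^('i \<Rightarrow> 'd::finite) \<Rightarrow> real" where
  "tau_bip A \<psi> = 2 * (1 - Re (purity A \<psi>))"

text \<open>One-tangle: average over the 2^(N-1)-1 unordered bipartitions {A, -A}.
  Each unordered bipartition corresponds to exactly two proper nonempty subsets A,
  hence the factor 1/2 (tau_{A|B} is symmetric in A,B).\<close>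
definition one_tangle :: "complex^('i::finite \<Rightarrow> 'd::finite) \<Rightarrow> real" where
  "one_tangle \<psi> =
     ((\<Sum>A\<in>{A. A \<noteq> {} \<and> A \<noteq> (UNIV::'i set)}. tau_bip A \<psi>) / 2)
       / (2 ^ (CARD('i) - 1) - 1)"

definition ent_power ::
  "(complex^'d::finite) measure \<Rightarrow> complex^('i::finite \<Rightarrow> 'd)^('i \<Rightarrow> 'd) \<Rightarrow> real" where
  "ent_power S U = (\<integral>\<phi>. one_tangle (U *v prod_state \<phi>) \<partial>(PiM (UNIV::'i set) (\<lambda>_. S)))"

end

theory Submission
  imports Defs
begin


lemma cmat_vec_nth: "(cmat V *v x) $ i = (\<Sum>j\<in>UNIV. complex_of_real (V $ i $ j) * x $ j)"
  by (simp add: cmat_def matrix_vector_mult_def)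

lemma ifmult: "(if P then 1 else 0) * (a::'a::semiring_1) = (if P then a else 0)" by simp
lemma ofreal_if: "complex_of_real (if P then 1 else 0) = (if P then 1 else 0)" by simp

lemma sum3_swap: "(\<Sum>i\<in>A. \<Sum>k\<in>B. \<Sum>j\<in>C. f i k j) = (\<Sum>k\<in>B. \<Sum>j\<in>C. \<Sum>i\<in>A. f i k j)"
  by (subst sum.swap) (rule sum.cong[OF refl], rule sum.swap)

lemma orth_col: "orthogonal_matrix V \<Longrightarrow> (\<Sum>i\<in>UNIV. V $ i $ j * V $ i $ k) = (if j = k then 1 else 0)"
proof -
  assume "orthogonal_matrix V"
  then have "transpose V ** V = mat 1" by (simp add: orthogonal_matrix_def)
  then have "(transpose V ** V) $ j $ k = mat 1 $ j $ k" by simp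
  then show ?thesis by (simp add: matrix_matrix_mult_def transpose_def mat_def mult.commute)
qed

lemma orth_bilin:
  assumes "orthogonal_matrix V"
  shows "(\<Sum>i\<in>UNIV. (cmat V *v x) $ i * (cmat V *v y) $ i) = (\<Sum>i\<in>UNIV. x $ i * y $ i)"
proof -
  have "(\<Sum>i\<in>UNIV. (cmat V *v x) $ i * (cmat V *v y) $ i)
      = (\<Sum>i\<in>UNIV. \<Sum>k\<in>UNIV. \<Sum>j\<in>UNIV. complex_of_real (V $ i $ j * V $ i $ k) * (x $ j * y $ k))"
    by (simp add: cmat_vec_nth sum_distrib_left sum_distrib_right algebra_simps)
  also have "\<dots> = (\<Sum>k\<in>UNIV. \<Sum>j\<in>UNIV. complex_of_real (\<Sum>i\<in>UNIV. V $ i $ j * V $ i $ k) * (x $ j * y $ k))"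
    by (subst sum3_swap) (simp add: sum_distrib_right)
  also have "\<dots> = (\<Sum>i\<in>UNIV. x $ i * y $ i)"
    by (simp add: orth_col[OF assms] ofreal_if ifmult del: of_real_eq_1_iff)
  finally show ?thesis .
qed

lemma cnj_cmat_vec: "cnj ((cmat V *v x) $ i) = (cmat V *v (\<chi> j. cnj (x $ j))) $ i"
  by (simp add: cmat_vec_nth)

lemma norm_sq_vec: "complex_of_real ((norm (x::complex^'n))^2) = (\<Sum>i\<in>UNIV. x $ i * cnj (x $ i))"
proof -
  have "(norm x)^2 = (\<Sum>i\<in>UNIV. (cmod (x $ i))^2)"
    by (simp add: norm_vec_def L2_set_def sum_nonneg)
  then have "complex_of_real ((norm x)^2) = (\<Sum>i\<in>UNIV. complex_of_real ((cmod (x $ i))^2))" by simp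
  also have "\<dots> = (\<Sum>i\<in>UNIV. x $ i * cnj (x $ i))"
    by (rule sum.cong[OF refl]) (rule complex_norm_square)
  finally show ?thesis .
qed

lemma orth_norm:
  assumes "orthogonal_matrix V" shows "norm (cmat V *v x) = norm x"
proof -
  have "complex_of_real ((norm (cmat V *v x))^2) = complex_of_real ((norm x)^2)"
    unfolding norm_sq_vec cnj_cmat_vec using orth_bilin[OF assms, of x "\<chi> j. cnj (x $ j)"] by simp
  then have "(norm (cmat V *v x))^2 = (norm x)^2" using of_real_eq_iff by blast
  then show ?thesis by (simp add: power2_eq_iff_nonneg)
qed

lemma unit_col: "unitary_mat U \<Longrightarrow> (\<Sum>i\<in>UNIV. cnj (U $ i $ j) * U $ i $ k) = (if j = k then 1 else 0)"
proof -
  assume "unitary_mat U"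
  then have "cadj U ** U = mat 1" by (simp add: unitary_mat_def)
  then have "(cadj U ** U) $ j $ k = mat 1 $ j $ k" by simp
  then show ?thesis by (simp add: matrix_matrix_mult_def cadj_def mat_def)
qed

lemma unit_norm:
  assumes "unitary_mat U" shows "norm (U *v x) = norm x"
proof -
  have "(\<Sum>i\<in>UNIV. (U *v x) $ i * cnj ((U *v x) $ i))
      = (\<Sum>i\<in>UNIV. \<Sum>k\<in>UNIV. \<Sum>j\<in>UNIV. (cnj (U $ i $ k) * U $ i $ j) * (x $ j * cnj (x $ k)))"
    by (simp add: matrix_vector_mult_def sum_distrib_left sum_distrib_right algebra_simps)
  also have "\<dots> = (\<Sum>k\<in>UNIV. \<Sum>j\<in>UNIV. (\<Sum>i\<in>UNIV. cnj (U $ i $ k) * U $ i $ j) * (x $ j * cnj (x $ k)))"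
    by (subst sum3_swap) (simp add: sum_distrib_right)
  also have "\<dots> = (\<Sum>i\<in>UNIV. x $ i * cnj (x $ i))"
    by (simp add: unit_col[OF assms] ifmult)
  finally have "complex_of_real ((norm (U *v x))^2) = complex_of_real ((norm x)^2)"
    unfolding norm_sq_vec .
  then have "(norm (U *v x))^2 = (norm x)^2" using of_real_eq_iff by blast
  then show ?thesis by (simp add: power2_eq_iff_nonneg)
qed

lemma orth_unitary: "orthogonal_matrix V \<Longrightarrow> unitary_mat (cmat V)"
proof -
  assume o: "orthogonal_matrix V"
  have c: "cadj (cmat V) = cmat (transpose V)"
    by (simp add: cadj_def cmat_def transpose_def)
  have m: "cmat A ** cmat B = cmat (A ** B)" for A B :: "real^'n^'n"
    by (simp add: cmat_def matrix_matrix_mult_def vec_eq_iff)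
  have one: "cmat (mat 1 :: real^'n^'n) = mat 1"
    by (simp add: cmat_def mat_def vec_eq_iff)
  show ?thesis using o unfolding unitary_mat_def c m orthogonal_matrix_def by (simp add: one)
qed

lemma cont_bound:
  fixes f :: "'a::euclidean_space \<Rightarrow> 'b::real_normed_vector"
  assumes "continuous_on UNIV f"
  shows "\<exists>K. \<forall>x. norm x \<le> 1 \<longrightarrow> norm (f x) \<le> K"
proof -
  have "compact (f ` cball 0 1)"
    by (rule compact_continuous_image) (use assms continuous_on_subset in auto)
  then have "bounded (f ` cball 0 1)" by (rule compact_imp_bounded)
  then obtain K where "\<forall>y\<in>f ` cball 0 1. norm y \<le> K" using bounded_iff by blast
  then show ?thesis by (intro exI[of _ K]) auto
qed

lemma int_cont:
  fixes f :: "'a::euclidean_space \<Rightarrow> 'b::{banach,second_countable_topology}"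
  assumes "prob_space M" "sets M = sets borel" "AE x in M. norm x \<le> 1" "continuous_on UNIV f"
  shows "integrable M f"
proof -
  obtain K where K: "\<forall>x. norm x \<le> 1 \<longrightarrow> norm (f x) \<le> K" using cont_bound[OF assms(4)] by blast
  have m: "f \<in> borel_measurable M"
    using borel_measurable_continuous_onI[OF assms(4)] measurable_cong_sets[OF assms(2) refl] by blast
  show ?thesis
    apply (rule finite_measure.integrable_const_bound[where B=K])
    using assms(1) prob_space.finite_measure apply blast
    using assms(3) K apply (auto elim: AE_mp)[1]
    by (rule m)
qed

definition mono4 :: "'n \<Rightarrow> 'n \<Rightarrow> 'n \<Rightarrow> 'n \<Rightarrow> complex^'n \<Rightarrow> complex" where
  "mono4 p q r s x = x $ p * cnj (x $ q) * x $ r * cnj (x $ s)"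

lemma mono4_cont: "continuous_on UNIV (mono4 p q r s)"
  unfolding mono4_def by (intro continuous_intros)


lemma inv_integral:
  fixes nu :: "'a::topological_space measure" and T :: "'a \<Rightarrow> 'a"
    and f :: "'a \<Rightarrow> 'b::{banach,second_countable_topology}"
  assumes "sets nu = sets borel" "distr nu borel T = nu" "T \<in> borel_measurable borel"
    "f \<in> borel_measurable borel"
  shows "(\<integral>x. f (T x) \<partial>nu) = integral\<^sup>L nu f"
proof -
  have T: "T \<in> nu \<rightarrow>\<^sub>M borel" using assms(3) measurable_cong_sets[OF assms(1) refl] by blast
  have "integral\<^sup>L nu f = integral\<^sup>L (distr nu borel T) f" using assms(2) by simp
  also have "\<dots> = (\<integral>x. f (T x) \<partial>nu)" by (rule integral_distr) (use T assms(4) in auto)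
  finally show ?thesis by simp
qed

lemma mvm_cont: "continuous_on UNIV (\<lambda>x. (A::complex^'n::finite^'m::finite) *v x)"
  unfolding matrix_vector_mult_def by (intro continuous_on_vec_lambda continuous_intros)

lemma mvm_meas: "(\<lambda>x. (A::complex^'n::finite^'m::finite) *v x) \<in> borel_measurable borel"
  by (rule borel_measurable_continuous_onI[OF mvm_cont])

definition diagm :: "('n::finite \<Rightarrow> real) \<Rightarrow> real^'n^'n" where
  "diagm f = (\<chi> i j. if i = j then f i else 0)"

lemma diagm_col: "(\<Sum>i\<in>UNIV. diagm f $ i $ j * diagm f $ i $ k) = (if j = k then f j * f j else 0)"
proof -
  have "(\<Sum>i\<in>UNIV. diagm f $ i $ j * diagm f $ i $ k) = (\<Sum>i\<in>UNIV. if i = j then (if j = k then f j * f j else 0) else 0)"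
    by (rule sum.cong) (auto simp: diagm_def)
  then show ?thesis by simp
qed

lemma diagm_orth: "(\<And>i. f i * f i = 1) \<Longrightarrow> orthogonal_matrix (diagm f)"
  unfolding orthogonal_matrix
  by (simp add: vec_eq_iff matrix_matrix_mult_def transpose_def mat_def diagm_col)

lemma ofr_if0: "complex_of_real (if P then a else 0) * b = (if P then complex_of_real a * b else 0)" by simp

lemma diagm_vec: "cmat (diagm f) *v x = (\<chi> i. complex_of_real (f i) * x $ i)"
  by (simp add: vec_eq_iff cmat_vec_nth diagm_def ofr_if0 del: of_real_eq_0_iff)

definition pm :: "('n::finite \<Rightarrow> 'n) \<Rightarrow> real^'n^'n" where
  "pm \<pi> = (\<chi> i j. if j = \<pi> i then 1 else 0)"

lemma pm_vec: "cmat (pm \<pi>) *v x = (\<chi> i. x $ \<pi> i)"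
  by (simp add: vec_eq_iff cmat_vec_nth pm_def ofr_if0 del: of_real_eq_0_iff)

lemma delta2: "(\<Sum>m\<in>(UNIV::'a::finite set). (if j = m then 1 else 0) * (if k = m then 1 else (0::real))) = (if j = k then 1 else 0)"
proof -
  have "(\<Sum>m\<in>UNIV. (if j = m then 1 else 0) * (if k = m then 1 else (0::real)))
     = (\<Sum>m\<in>UNIV. if m = j then (if k = j then 1 else 0) else 0)" by (rule sum.cong) auto
  then show ?thesis by auto
qed

lemma pm_col:
  fixes \<pi> :: "'n::finite \<Rightarrow> 'n"
  assumes "bij \<pi>"
  shows "(\<Sum>i\<in>UNIV. (if j = \<pi> i then 1 else 0) * (if k = \<pi> i then 1 else (0::real))) = (if j = k then 1 else 0)"
proof -
  have "(\<Sum>i\<in>UNIV. (if j = \<pi> i then 1 else 0) * (if k = \<pi> i then 1 else (0::real)))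
      = (\<Sum>m\<in>\<pi> ` UNIV. (if j = m then 1 else 0) * (if k = m then 1 else (0::real)))"
    using assms by (simp add: sum.reindex bij_is_inj)
  also have "\<dots> = (if j = k then 1 else 0)" by (subst bij_is_surj[OF assms]) (rule delta2)
  finally show ?thesis .
qed

lemma pm_orth:
  assumes "bij \<pi>" shows "orthogonal_matrix (pm \<pi>)"
  unfolding orthogonal_matrix
  by (simp add: vec_eq_iff matrix_matrix_mult_def transpose_def mat_def pm_def pm_col[OF assms])

definition rotm :: "'n::finite \<Rightarrow> 'n \<Rightarrow> real^'n^'n" where
  "rotm p q = (\<chi> i j. if i = p then (if j = p \<or> j = q then 1/sqrt 2 else 0)
      else if i = q then (if j = p then - (1/sqrt 2) else if j = q then 1/sqrt 2 else 0)
      else if i = j then 1 else 0)"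

lemma sum_split2:
  assumes "p \<noteq> q"
  shows "(\<Sum>i\<in>(UNIV::'n::finite set). f i) = f p + f q + (\<Sum>i\<in>UNIV - {p,q}. f i)"
proof -
  have "(\<Sum>i\<in>UNIV. f i) = (\<Sum>i\<in>UNIV - {p,q}. f i) + (\<Sum>i\<in>{p,q}. f i)"
    by (rule sum.subset_diff) auto
  then show ?thesis using assms by (simp add: algebra_simps)
qed

lemma rotm_col:
  assumes "p \<noteq> q"
  shows "(\<Sum>i\<in>UNIV. rotm p q $ i $ j * rotm p q $ i $ k) = (if j = k then 1 else 0)"
proof -
  have c: "1/sqrt 2 * (1/sqrt 2) = (1/2::real)" by (simp add: divide_simps)
  let ?f = "\<lambda>i. rotm p q $ i $ j * rotm p q $ i $ k"
  have rest: "(\<Sum>i\<in>UNIV - {p,q}. ?f i) = (if j = k \<and> j \<noteq> p \<and> j \<noteq> q then 1 else 0)"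
  proof -
    have "(\<Sum>i\<in>UNIV - {p,q}. ?f i) = (\<Sum>i\<in>UNIV - {p,q}. if i = j then (if j = k then 1 else 0) else 0)"
      by (rule sum.cong) (auto simp: rotm_def)
    also have "\<dots> = (if j = k \<and> j \<noteq> p \<and> j \<noteq> q then 1 else 0)"
      by (subst sum.delta) auto
    finally show ?thesis .
  qed
  show ?thesis
    unfolding sum_split2[OF assms, of ?f] rest
    using assms c by (auto simp: rotm_def)
qed

lemma rotm_orth:
  assumes "p \<noteq> q" shows "orthogonal_matrix (rotm p q)"
  unfolding orthogonal_matrix
  by (simp add: vec_eq_iff matrix_matrix_mult_def transpose_def mat_def rotm_col[OF assms] mult.commute)

lemma rotm_vec_p:
  assumes "p \<noteq> q" shows "(cmat (rotm p q) *v x) $ p = complex_of_real (1/sqrt 2) * (x $ p + x $ q)"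
proof -
  have "(cmat (rotm p q) *v x) $ p = (\<Sum>j\<in>UNIV. complex_of_real (rotm p q $ p $ j) * x $ j)"
    by (rule cmat_vec_nth)
  also have "\<dots> = complex_of_real (1/sqrt 2) * x $ p + complex_of_real (1/sqrt 2) * x $ q
      + (\<Sum>j\<in>UNIV - {p,q}. complex_of_real (rotm p q $ p $ j) * x $ j)"
    by (subst sum_split2[OF assms]) (simp add: rotm_def)
  also have "(\<Sum>j\<in>UNIV - {p,q}. complex_of_real (rotm p q $ p $ j) * x $ j) = 0"
    by (rule sum.neutral) (simp add: rotm_def)
  finally show ?thesis by (simp add: add_divide_distrib)
qed




lemma exp16:
  fixes c :: real
  assumes "y $ p = complex_of_real c * (x$p + x$q)" "p \<noteq> q"
  shows "mono4 p p p p y = complex_of_real (c^4) *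
    (\<Sum>a\<in>{p,q}. \<Sum>b\<in>{p,q}. \<Sum>c\<in>{p,q}. \<Sum>d\<in>{p,q}. mono4 a b c d x)"
proof -
  have "mono4 p p p p y = complex_of_real (c^4) * ((x$p + x$q) * cnj (x$p + x$q) * (x$p + x$q) * cnj (x$p + x$q))"
    unfolding mono4_def assms(1) by (simp only: complex_cnj_mult complex_cnj_complex_of_real power4_eq_xxxx of_real_mult mult_ac)
  also have "\<dots> = complex_of_real (c^4) *
    (\<Sum>a\<in>{p,q}. \<Sum>b\<in>{p,q}. \<Sum>c\<in>{p,q}. \<Sum>d\<in>{p,q}. mono4 a b c d x)"
    using assms(2) by (simp add: mono4_def algebra_simps)
  finally show ?thesis .
qed

lemma ex_perm2:
  fixes p q p' q' :: 'a
  assumes "p \<noteq> q" "p' \<noteq> q'"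
  shows "\<exists>\<pi>. bij \<pi> \<and> \<pi> p = p' \<and> \<pi> q = q'"
proof -
  define t1 where "t1 = Transposition.transpose p p'"
  define q1 where "q1 = t1 q"
  have q1: "q1 \<noteq> p'" using assms unfolding q1_def t1_def by (auto simp: Transposition.transpose_def)
  let ?\<pi> = "Transposition.transpose q1 q' \<circ> t1"
  have "bij ?\<pi>" unfolding t1_def by (intro bij_comp bij_transpose)
  moreover have "?\<pi> p = p'" using q1 assms unfolding t1_def
    by (auto simp: Transposition.transpose_def)
  moreover have "?\<pi> q = q'" by (simp flip: q1_def)
  ultimately show ?thesis by blast
qed

locale sph =
  fixes nu :: "(complex^'n::finite) measure"
  assumes prob: "prob_space nu" and sets_nu: "sets nu = sets borel"
    and unit: "AE x in nu. norm x = 1"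
    and oinv: "\<And>V. orthogonal_matrix V \<Longrightarrow> distr nu borel (\<lambda>x. cmat V *v x) = nu"
begin

definition mom :: "'n \<Rightarrow> 'n \<Rightarrow> 'n \<Rightarrow> 'n \<Rightarrow> complex" where
  "mom p q r s = integral\<^sup>L nu (mono4 p q r s)"

lemma unit_le: "AE x in nu. norm x \<le> 1"
  by (rule AE_mp[OF unit]) auto

lemma integ: "continuous_on UNIV f \<Longrightarrow> integrable nu (f :: complex^'n \<Rightarrow> 'b::{banach,second_countable_topology})"
  by (rule int_cont[OF prob sets_nu unit_le])

lemma mono_int: "integrable nu (mono4 p q r s)"
  by (rule integ[OF mono4_cont])

lemma orth_int: "orthogonal_matrix V \<Longrightarrow> (\<integral>x. mono4 p q r s (cmat V *v x) \<partial>nu) = mom p q r s"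
  unfolding mom_def
  by (rule inv_integral[OF sets_nu oinv mvm_meas borel_measurable_continuous_onI[OF mono4_cont]])

lemma mom_perm: "bij \<pi> \<Longrightarrow> mom (\<pi> p) (\<pi> q) (\<pi> r) (\<pi> s) = mom p q r s"
proof -
  assume b: "bij \<pi>"
  have e: "\<And>x. mono4 p q r s (cmat (pm \<pi>) *v x) = mono4 (\<pi> p) (\<pi> q) (\<pi> r) (\<pi> s) x"
    by (simp add: pm_vec mono4_def)
  show ?thesis using orth_int[OF pm_orth[OF b], of p q r s] unfolding e by (simp add: mom_def)
qed

lemma mom_zero:
  assumes "\<not>(p = q \<and> r = s)" "\<not>(p = s \<and> q = r)" "\<not>(p = r \<and> q = s)"
  shows "mom p q r s = 0"
proof -
  define sg where "sg k i = (if i = k then -1 else 1::real)" for k i :: 'n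
  have "\<exists>k\<in>{p,q,r,s}. sg k p * sg k q * sg k r * sg k s = -1"
    using assms by (auto simp: sg_def)
  then obtain k where k: "sg k p * sg k q * sg k r * sg k s = -1" by blast
  have o: "orthogonal_matrix (diagm (sg k))" by (rule diagm_orth) (simp add: sg_def)
  have "mom p q r s = (\<integral>x. mono4 p q r s (cmat (diagm (sg k)) *v x) \<partial>nu)"
    using orth_int[OF o] by simp
  also have "\<dots> = (\<integral>x. complex_of_real (sg k p * sg k q * sg k r * sg k s) * mono4 p q r s x \<partial>nu)"
    by (rule Bochner_Integration.integral_cong[OF refl]) (simp add: diagm_vec mono4_def)
  also have "\<dots> = - mom p q r s" using k by (simp add: mom_def)
  finally show ?thesis by simp
qed

lemma mom_pppp: "mom p p p p = mom p0 p0 p0 p0"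
  using mom_perm[OF bij_transpose, of p0 p p0 p0 p0 p0] by simp

context
  fixes p0 q0 :: 'n
  assumes pq0: "p0 \<noteq> q0"
begin

definition "Am = mom p0 p0 p0 p0"
definition "Bm = mom p0 p0 q0 q0"
definition "Cm = mom p0 q0 p0 q0"

lemma mom_A: "mom p p p p = Am"
  unfolding Am_def by (rule mom_pppp)

lemma mom_pair:
  assumes "p \<noteq> q"
  shows "mom p p q q = Bm" "mom p q p q = Cm"
proof -
  obtain \<pi> where \<pi>: "bij \<pi>" "\<pi> p0 = p" "\<pi> q0 = q" using ex_perm2[OF pq0 assms] by blast
  show "mom p p q q = Bm" unfolding Bm_def using mom_perm[OF \<pi>(1), of p0 p0 q0 q0] \<pi> by simp
  show "mom p q p q = Cm" unfolding Cm_def using mom_perm[OF \<pi>(1), of p0 q0 p0 q0] \<pi> by simp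
qed

lemma mom_pqqp: "mom p q q p = mom p p q q"
proof -
  have "mono4 p q q p = mono4 p p q q" by (rule ext) (simp add: mono4_def)
  then show ?thesis by (simp add: mom_def)
qed

lemma mom_pqqp_B: "p \<noteq> q \<Longrightarrow> mom p q q p = Bm"
  by (simp add: mom_pqqp mom_pair)

lemma int_sum4:
  "(\<integral>x. (\<Sum>a\<in>I. \<Sum>b\<in>J. \<Sum>c\<in>K. \<Sum>d\<in>L. mono4 a b c d x) \<partial>nu)
    = (\<Sum>a\<in>I. \<Sum>b\<in>J. \<Sum>c\<in>K. \<Sum>d\<in>L. mom a b c d)"
  by (simp add: mom_def integrable_sum mono_int)

lemma rot_rel: "Am = 2 * Bm + Cm"
proof -
  have s4: "(sqrt 2::real)^4 = 4" using power_mult[of "sqrt 2::real" 2 2] by simp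
  have c4: "(1 / sqrt 2::real)^4 = 1/4" by (simp add: power_one_over s4)
  have e: "\<And>x. mono4 p0 p0 p0 p0 (cmat (rotm p0 q0) *v x)
     = 1/4 * (\<Sum>a\<in>{p0,q0}. \<Sum>b\<in>{p0,q0}. \<Sum>c\<in>{p0,q0}. \<Sum>d\<in>{p0,q0}. mono4 a b c d x)"
    using exp16[OF rotm_vec_p[OF pq0] pq0] unfolding c4 by simp
  have "Am = (\<integral>x. mono4 p0 p0 p0 p0 (cmat (rotm p0 q0) *v x) \<partial>nu)"
    unfolding Am_def using orth_int[OF rotm_orth[OF pq0]] by simp
  also have "\<dots> = 1/4 * (\<Sum>a\<in>{p0,q0}. \<Sum>b\<in>{p0,q0}. \<Sum>c\<in>{p0,q0}. \<Sum>d\<in>{p0,q0}. mom a b c d)"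
    unfolding e integral_mult_right_zero int_sum4 ..
  also have "\<dots> = 1/4 * (2 * Am + 4 * Bm + 2 * Cm)"
    using pq0 pq0[symmetric]
    by (simp add: mom_zero mom_pqqp_B mom_pair mom_A)
  finally have "2 * Am = 2 * (2 * Bm + Cm)" by (simp add: field_simps)
  then show ?thesis using mult_left_cancel[of "2::complex" Am "2 * Bm + Cm"] by simp
qed

lemma mom_formula0:
  "mom p q r s = Bm * ((if p = q \<and> r = s then 1 else 0) + (if p = s \<and> q = r then 1 else 0))
     + Cm * (if p = r \<and> q = s then 1 else 0)"
  using rot_rel mom_zero[of p q r s]
  by (cases "p = q"; cases "r = s"; cases "p = s"; cases "q = r"; cases "p = r"; cases "q = s")
    (auto simp: mom_A mom_pair mom_pqqp_B)



lemma sum_delta_sq: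
  "(\<Sum>p\<in>(UNIV::'n set). \<Sum>q\<in>UNIV. a + (if p = q then b else 0))
     = of_nat CARD('n) * of_nat CARD('n) * a + of_nat CARD('n) * (b::complex)"
  by (simp add: sum.distrib algebra_simps)

lemma meas_cont: "continuous_on UNIV f \<Longrightarrow> f \<in> borel_measurable nu"
  using borel_measurable_continuous_onI measurable_cong_sets[OF sets_nu refl] by blast

lemma norm_rel: "(\<Sum>p\<in>UNIV. \<Sum>q\<in>UNIV. mom p p q q) = 1"
proof -
  have pw: "(\<Sum>p\<in>UNIV. \<Sum>q\<in>UNIV. mono4 p p q q x) = complex_of_real ((norm x)^2) * complex_of_real ((norm x)^2)" for x
    unfolding norm_sq_vec sum_product by (simp add: mono4_def mult_ac)
  have "(\<Sum>p\<in>UNIV. \<Sum>q\<in>UNIV. mom p p q q) = (\<integral>x. (\<Sum>p\<in>UNIV. \<Sum>q\<in>UNIV. mono4 p p q q x) \<partial>nu)"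
    by (simp add: mom_def integrable_sum mono_int)
  also have "\<dots> = (\<integral>x. 1 \<partial>nu)"
  proof (rule integral_cong_AE)
    show "(\<lambda>x. \<Sum>p\<in>UNIV. \<Sum>q\<in>UNIV. mono4 p p q q x) \<in> borel_measurable nu"
      by (rule meas_cont) (intro continuous_on_sum mono4_cont)
    show "(\<lambda>x. 1::complex) \<in> borel_measurable nu" by simp
    show "AE x in nu. (\<Sum>p\<in>UNIV. \<Sum>q\<in>UNIV. mono4 p p q q x) = 1"
      using unit by (rule AE_mp) (simp add: pw)
  qed
  also have "\<dots> = 1" using prob_space.prob_space[OF prob] by simp
  finally show ?thesis .
qed

lemma sq_rel: "(\<Sum>p\<in>UNIV. \<Sum>q\<in>UNIV. mom p q p q) = complex_of_real (\<integral>x. (cmod (\<Sum>p\<in>UNIV. (x $ p)^2))^2 \<partial>nu)"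
proof -
  have pw: "(\<Sum>p\<in>UNIV. \<Sum>q\<in>UNIV. mono4 p q p q x) = complex_of_real ((cmod (\<Sum>p\<in>UNIV. (x $ p)^2))^2)" for x
    unfolding complex_norm_square cnj_sum sum_product by (simp add: mono4_def power2_eq_square mult_ac)
  have "(\<Sum>p\<in>UNIV. \<Sum>q\<in>UNIV. mom p q p q) = (\<integral>x. (\<Sum>p\<in>UNIV. \<Sum>q\<in>UNIV. mono4 p q p q x) \<partial>nu)"
    by (simp add: mom_def integrable_sum mono_int)
  also have "\<dots> = (\<integral>x. complex_of_real ((cmod (\<Sum>p\<in>UNIV. (x $ p)^2))^2) \<partial>nu)"
    unfolding pw ..
  also have "\<dots> = complex_of_real (\<integral>x. (cmod (\<Sum>p\<in>UNIV. (x $ p)^2))^2 \<partial>nu)"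
    by (rule integral_complex_of_real)
  finally show ?thesis .
qed


lemma mom_ppqq': "mom p p q q = Bm + (if p = q then Bm + Cm else 0)"
  by (simp add: mom_formula0[of p p q q])

lemma mom_pqpq': "mom p q p q = Cm + (if p = q then 2 * Bm else 0)"
  by (simp add: mom_formula0[of p q p q])

lemma lin_eqs:
  "of_nat CARD('n) * of_nat CARD('n) * Bm + of_nat CARD('n) * (Bm + Cm) = 1"
  "of_nat CARD('n) * of_nat CARD('n) * Cm + of_nat CARD('n) * (2 * Bm)
     = complex_of_real (\<integral>x. (cmod (\<Sum>p\<in>UNIV. (x $ p)^2))^2 \<partial>nu)"
  using norm_rel sq_rel unfolding mom_ppqq' mom_pqpq' sum_delta_sq by auto

end

lemma two_elems: "CARD('n) \<ge> 2 \<Longrightarrow> \<exists>p q::'n. p \<noteq> q"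
proof (rule ccontr)
  assume c: "CARD('n) \<ge> 2" "\<not> (\<exists>p q::'n. p \<noteq> q)"
  then have "(UNIV::'n set) \<subseteq> {undefined}" by auto
  then have "CARD('n) \<le> card {undefined::'n}" by (rule card_mono[rotated]) simp
  then show False using c by simp
qed

lemma mom_explicit:
  assumes "CARD('n) \<ge> 2"
  shows "mom p q r s =
    complex_of_real ((real CARD('n) - (\<integral>x. (cmod (\<Sum>p\<in>UNIV. (x $ p)^2))^2 \<partial>nu))
        / (real CARD('n) * ((real CARD('n))^2 + real CARD('n) - 2)))
      * ((if p = q \<and> r = s then 1 else 0) + (if p = s \<and> q = r then 1 else 0))
    + complex_of_real (((real CARD('n) + 1) * (\<integral>x. (cmod (\<Sum>p\<in>UNIV. (x $ p)^2))^2 \<partial>nu) - 2)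
        / (real CARD('n) * ((real CARD('n))^2 + real CARD('n) - 2)))
      * (if p = r \<and> q = s then 1 else 0)"
proof -
  obtain p0 q0 :: 'n where pq: "p0 \<noteq> q0" using two_elems[OF assms] by blast
  define Dr where "Dr = real CARD('n)"
  define t where "t = (\<integral>x. (cmod (\<Sum>p\<in>UNIV. (x $ p)^2))^2 \<partial>nu)"
  define D where "D = complex_of_real Dr"
  have Dn: "(of_nat CARD('n) :: complex) = D" unfolding D_def Dr_def by simp
  have e1: "D * D * Bm p0 q0 + D * (Bm p0 q0 + Cm p0 q0) = 1" using lin_eqs(1)[OF pq] unfolding Dn .
  have e2: "D * D * Cm p0 q0 + D * (2 * Bm p0 q0) = complex_of_real t" using lin_eqs(2)[OF pq] unfolding Dn t_def .
  have Dr2: "Dr \<ge> 2" using assms unfolding Dr_def by simp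
  have pos: "Dr * (Dr^2 + Dr - 2) > 0"
  proof -
    have "Dr^2 \<ge> 4" using Dr2 by (metis power_mono[of 2 Dr 2] zero_le_numeral num_double numeral_times_numeral power2_eq_square)
    then show ?thesis using Dr2 by (intro mult_pos_pos) auto
  qed
  have nz: "D * (D^2 + D - 2) \<noteq> 0"
  proof -
    have "D * (D^2 + D - 2) = complex_of_real (Dr * (Dr^2 + Dr - 2))" unfolding D_def by simp
    then show ?thesis using pos by (metis of_real_eq_0_iff order_less_irrefl)
  qed
  have kB: "Bm p0 q0 * (D * (D^2 + D - 2)) = D * (D * D * Bm p0 q0 + D * (Bm p0 q0 + Cm p0 q0)) - (D * D * Cm p0 q0 + D * (2 * Bm p0 q0))"
    by algebra
  have kC: "Cm p0 q0 * (D * (D^2 + D - 2)) = (D + 1) * (D * D * Cm p0 q0 + D * (2 * Bm p0 q0)) - 2 * (D * D * Bm p0 q0 + D * (Bm p0 q0 + Cm p0 q0))"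
    by algebra
  have B: "Bm p0 q0 = complex_of_real ((Dr - t) / (Dr * (Dr^2 + Dr - 2)))"
  proof -
    have "Bm p0 q0 * (D * (D^2 + D - 2)) = D - complex_of_real t" using kB unfolding e1 e2 by simp
    then have "Bm p0 q0 = (D - complex_of_real t) / (D * (D^2 + D - 2))" using nz by (simp add: eq_divide_eq)
    then show ?thesis unfolding D_def by simp
  qed
  have C: "Cm p0 q0 = complex_of_real (((Dr + 1) * t - 2) / (Dr * (Dr^2 + Dr - 2)))"
  proof -
    have "Cm p0 q0 * (D * (D^2 + D - 2)) = (D + 1) * complex_of_real t - 2" using kC unfolding e1 e2 by simp
    then have "Cm p0 q0 = ((D + 1) * complex_of_real t - 2) / (D * (D^2 + D - 2))" using nz by (simp add: eq_divide_eq)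
    then show ?thesis unfolding D_def by simp
  qed
  show ?thesis using mom_formula0[OF pq, of p q r s] unfolding B C Dr_def t_def .
qed

end




locale usph =
  fixes nu :: "(complex^'n::finite) measure"
  assumes prob: "prob_space nu" and sets_nu: "sets nu = sets borel"
    and unit: "AE x in nu. norm x = 1"
    and uinv: "\<And>U. unitary_mat U \<Longrightarrow> distr nu borel (\<lambda>x. U *v x) = nu"

sublocale usph \<subseteq> sph
  by (rule sph.intro[OF prob sets_nu unit uinv[OF orth_unitary]])

definition phm :: "'n::finite \<Rightarrow> complex^'n^'n" where
  "phm k = (\<chi> i j. if i = j then (if i = k then \<i> else 1) else 0)"

lemma phm_unitary: "unitary_mat (phm k)"
proof -
  have "(\<Sum>l\<in>UNIV. phm k $ i $ l * cnj (phm k $ j $ l)) = (if i = j then 1 else 0)" for i j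
  proof -
    have "(\<Sum>l\<in>UNIV. phm k $ i $ l * cnj (phm k $ j $ l)) = (\<Sum>l\<in>UNIV. if l = i then (if i = j then 1 else 0) else 0)"
      by (rule sum.cong) (auto simp: phm_def)
    then show ?thesis by simp
  qed
  moreover have "(\<Sum>l\<in>UNIV. cnj (phm k $ l $ i) * phm k $ l $ j) = (if i = j then 1 else 0)" for i j
  proof -
    have "(\<Sum>l\<in>UNIV. cnj (phm k $ l $ i) * phm k $ l $ j) = (\<Sum>l\<in>UNIV. if l = i then (if i = j then 1 else 0) else 0)"
      by (rule sum.cong) (auto simp: phm_def)
    then show ?thesis by simp
  qed
  ultimately show ?thesis
    by (simp add: unitary_mat_def cadj_def matrix_matrix_mult_def mat_def vec_eq_iff)
qed

lemma phm_vec: "phm k *v x = (\<chi> i. (if i = k then \<i> else 1) * x $ i)"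
proof -
  have "(\<Sum>j\<in>UNIV. phm k $ i $ j * x $ j) = (if i = k then \<i> else 1) * x $ i" for i
  proof -
    have "(\<Sum>j\<in>UNIV. phm k $ i $ j * x $ j) = (\<Sum>j\<in>UNIV. if j = i then (if i = k then \<i> else 1) * x $ i else 0)"
      by (rule sum.cong) (auto simp: phm_def)
    then show ?thesis by simp
  qed
  then show ?thesis by (simp add: matrix_vector_mult_def vec_eq_iff)
qed

lemma denom_pos:
  fixes Dr :: real assumes Dr2: "Dr \<ge> 2" shows "Dr * (Dr^2 + Dr - 2) > 0"
proof -
  have "Dr^2 \<ge> 4" using Dr2 by (metis power_mono[of 2 Dr 2] zero_le_numeral num_double numeral_times_numeral power2_eq_square)
  then show ?thesis using Dr2 by (intro mult_pos_pos) auto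
qed

lemma solve_t:
  fixes Dr t :: real assumes "Dr \<ge> 2" "((Dr + 1) * t - 2) / (Dr * (Dr^2 + Dr - 2)) = 0"
  shows "t = 2 / (Dr + 1)"
proof -
  have Y: "Dr * (Dr^2 + Dr - 2) \<noteq> 0" using denom_pos[OF assms(1)] by linarith
  from assms(2) have "(Dr + 1) * t - 2 = 0 \<or> Dr * (Dr^2 + Dr - 2) = 0" by (simp only: divide_eq_0_iff)
  with Y have "(Dr + 1) * t - 2 = 0" by blast
  moreover have "Dr + 1 > 0" using assms(1) by simp
  ultimately show ?thesis by (simp add: field_simps)
qed

context usph begin

lemma t_unitary:
  assumes "CARD('n) \<ge> 2"
  shows "(\<integral>x. (cmod (\<Sum>p\<in>UNIV. (x $ p)^2))^2 \<partial>nu) = 2 / (real CARD('n) + 1)"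
proof -
  obtain p0 q0 :: 'n where pq: "p0 \<noteq> q0" using two_elems[OF assms] by blast
  have "mom p0 q0 p0 q0 = (\<integral>x. mono4 p0 q0 p0 q0 (phm p0 *v x) \<partial>nu)"
    unfolding mom_def
    by (rule inv_integral[OF sets_nu uinv[OF phm_unitary] mvm_meas borel_measurable_continuous_onI[OF mono4_cont], symmetric])
  also have "\<dots> = (\<integral>x. - mono4 p0 q0 p0 q0 x \<partial>nu)"
  proof (rule Bochner_Integration.integral_cong[OF refl])
    fix x :: "complex^'n"
    have "\<i> * x $ p0 * cnj (x $ q0) * (\<i> * x $ p0) * cnj (x $ q0) = - (x $ p0 * cnj (x $ q0) * x $ p0 * cnj (x $ q0))"
      by (simp add: mult_ac)
    then show "mono4 p0 q0 p0 q0 (phm p0 *v x) = - mono4 p0 q0 p0 q0 x"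
      using pq by (simp add: phm_vec mono4_def)
  qed
  also have "\<dots> = - mom p0 q0 p0 q0" by (simp add: mom_def)
  finally have z: "mom p0 q0 p0 q0 = 0" by simp
  define Dr where "Dr = real CARD('n)"
  define t where "t = (\<integral>x. (cmod (\<Sum>p\<in>UNIV. (x $ p)^2))^2 \<partial>nu)"
  have "complex_of_real (((Dr + 1) * t - 2) / (Dr * (Dr^2 + Dr - 2))) = 0"
    using z mom_explicit[OF assms, of p0 q0 p0 q0] pq unfolding Dr_def t_def by simp
  then have "((Dr + 1) * t - 2) / (Dr * (Dr^2 + Dr - 2)) = 0" by (simp only: of_real_eq_0_iff)
  then show ?thesis unfolding t_def[symmetric] Dr_def[symmetric]
    by (rule solve_t[rotated]) (use assms in \<open>simp add: Dr_def\<close>)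
qed

end




lemma merge_inj:
  assumes "a \<in> PiE A (\<lambda>_. UNIV)" "a' \<in> PiE A (\<lambda>_. UNIV)" "b \<in> PiE (- A) (\<lambda>_. UNIV)" "b' \<in> PiE (- A) (\<lambda>_. UNIV)"
  shows "merge A a b = merge A a' b' \<longleftrightarrow> a = a' \<and> b = b'"
proof
  assume m: "merge A a b = merge A a' b'"
  have "a = a'"
  proof
    fix i show "a i = a' i"
    proof (cases "i \<in> A")
      case True then show ?thesis using fun_cong[OF m, of i] by (simp add: merge_def)
    next
      case False then show ?thesis using assms(1,2) by (simp add: PiE_def extensional_def)
    qed
  qed
  moreover have "b = b'"
  proof
    fix i show "b i = b' i"
    proof (cases "i \<in> A")
      case False then show ?thesis using fun_cong[OF m, of i] by (simp add: merge_def)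
    next
      case True then show ?thesis using assms(3,4) by (simp add: PiE_def extensional_def)
    qed
  qed
  ultimately show "a = a' \<and> b = b'" ..
qed simp

lemma pur_mono:
  "purity A x = (\<Sum>a\<in>PiE A (\<lambda>_. UNIV). \<Sum>a'\<in>PiE A (\<lambda>_. UNIV). \<Sum>b\<in>PiE (- A) (\<lambda>_. UNIV). \<Sum>b'\<in>PiE (- A) (\<lambda>_. UNIV).
     mono4 (merge A a b) (merge A a' b) (merge A a' b') (merge A a b') x)"
  unfolding purity_def sum_product by (simp add: mono4_def mult_ac)

lemma sum4_delta:
  fixes X :: "'a set" and Y :: "'b set" and B C :: complex
  assumes "finite X" "finite Y"
  shows "(\<Sum>a\<in>X. \<Sum>a'\<in>X. \<Sum>b\<in>Y. \<Sum>b'\<in>Y.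
      B * ((if a = a' then 1 else 0) + (if b = b' then 1 else 0)) + C * (if a = a' \<and> b = b' then 1 else 0))
    = B * (of_nat (card X) * of_nat (card Y)^2 + of_nat (card X)^2 * of_nat (card Y)) + C * of_nat (card X) * of_nat (card Y)"
proof -
  have i1: "(\<Sum>a'\<in>X. (if a = a' then (c::complex) else 0)) = c" if "a \<in> X" for a c
    using assms that by (simp add: sum.delta)
  have i2: "(\<Sum>b'\<in>Y. (if b = b' then (c::complex) else 0)) = c" if "b \<in> Y" for b c
    using assms that by (simp add: sum.delta)
  have "(\<Sum>a\<in>X. \<Sum>a'\<in>X. \<Sum>b\<in>Y. \<Sum>b'\<in>Y.
      B * ((if a = a' then 1 else 0) + (if b = b' then 1 else 0)) + C * (if a = a' \<and> b = b' then 1 else 0))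
    = (\<Sum>a\<in>X. \<Sum>a'\<in>X. \<Sum>b\<in>Y. \<Sum>b'\<in>Y.
      (if a = a' then B else 0) + (if b = b' then B + (if a = a' then C else 0) else 0))"
    by (intro sum.cong refl) (auto simp: algebra_simps)
  also have "\<dots> = (\<Sum>a\<in>X. \<Sum>a'\<in>X. of_nat (card Y) * (of_nat (card Y) * (if a = a' then B else 0)
       + (B + (if a = a' then C else 0))))"
    using assms by (simp add: sum.distrib i2 cong: sum.cong)
  also have "\<dots> = (\<Sum>a\<in>X. of_nat (card Y) * of_nat (card Y) * B + of_nat (card X) * of_nat (card Y) * B + of_nat (card Y) * C)"
    using assms by (simp add: sum.distrib sum_distrib_left[symmetric] i1 algebra_simps cong: sum.cong)
  also have "\<dots> = B * (of_nat (card X) * of_nat (card Y)^2 + of_nat (card X)^2 * of_nat (card Y)) + C * of_nat (card X) * of_nat (card Y)"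
    by (simp add: algebra_simps power2_eq_square)
  finally show ?thesis .
qed


lemma exp_purity:
  fixes nu :: "(complex^('i::finite \<Rightarrow> 'd::finite)) measure" and A :: "'i set"
  assumes sph: "sph nu" and card: "CARD('i \<Rightarrow> 'd) \<ge> 2"
  defines "Dr \<equiv> real CARD('i \<Rightarrow> 'd)"
    and "t \<equiv> (\<integral>x. (cmod (\<Sum>p\<in>UNIV. (x $ p)^2))^2 \<partial>nu)"
  defines "Bc \<equiv> complex_of_real ((Dr - t) / (Dr * (Dr^2 + Dr - 2)))"
    and "Cc \<equiv> complex_of_real (((Dr + 1) * t - 2) / (Dr * (Dr^2 + Dr - 2)))"
  defines "X \<equiv> PiE A (\<lambda>_. UNIV::'d set)" and "Y \<equiv> PiE (- A) (\<lambda>_. UNIV::'d set)"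
  shows "integral\<^sup>L nu (purity A) = Bc * (of_nat (card X) * of_nat (card Y)^2 + of_nat (card X)^2 * of_nat (card Y))
     + Cc * of_nat (card X) * of_nat (card Y)"
proof -
  have fX: "finite X" "finite Y" unfolding X_def Y_def by (auto intro: finite_PiE)
  have "integral\<^sup>L nu (purity A) = (\<integral>x. (\<Sum>a\<in>X. \<Sum>a'\<in>X. \<Sum>b\<in>Y. \<Sum>b'\<in>Y.
     mono4 (merge A a b) (merge A a' b) (merge A a' b') (merge A a b') x) \<partial>nu)"
    unfolding pur_mono X_def Y_def ..
  also have "\<dots> = (\<Sum>a\<in>X. \<Sum>a'\<in>X. \<Sum>b\<in>Y. \<Sum>b'\<in>Y.
     sph.mom nu (merge A a b) (merge A a' b) (merge A a' b') (merge A a b'))"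
    by (simp add: sph.mom_def[OF sph] integrable_sum sph.mono_int[OF sph])
  also have "\<dots> = (\<Sum>a\<in>X. \<Sum>a'\<in>X. \<Sum>b\<in>Y. \<Sum>b'\<in>Y.
      Bc * ((if a = a' then 1 else 0) + (if b = b' then 1 else 0)) + Cc * (if a = a' \<and> b = b' then 1 else 0))"
  proof (intro sum.cong refl)
    fix a a' b b' assume m: "a \<in> X" "a' \<in> X" "b \<in> Y" "b' \<in> Y"
    note mi = merge_inj[OF m(1,1,3,4)[unfolded X_def Y_def]] merge_inj[OF m(1,2,3,3)[unfolded X_def Y_def]]
      merge_inj[OF m(2,1,3,4)[unfolded X_def Y_def]] merge_inj[OF m(2,2,4,4)[unfolded X_def Y_def]]
      merge_inj[OF m(1,2,3,4)[unfolded X_def Y_def]] merge_inj[OF m(2,1,3,4)[unfolded X_def Y_def]]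
      merge_inj[OF m(2,2,3,4)[unfolded X_def Y_def]] merge_inj[OF m(2,1,4,4)[unfolded X_def Y_def]]
      merge_inj[OF m(1,1,3,3)[unfolded X_def Y_def]]
    show "sph.mom nu (merge A a b) (merge A a' b) (merge A a' b') (merge A a b') =
      Bc * ((if a = a' then 1 else 0) + (if b = b' then 1 else 0)) + Cc * (if a = a' \<and> b = b' then 1 else 0)"
      unfolding sph.mom_explicit[OF sph card] Bc_def Cc_def Dr_def t_def
      by (simp add: mi eq_commute[of a' a] eq_commute[of b' b] conj_commute)
  qed
  also have "\<dots> = Bc * (of_nat (card X) * of_nat (card Y)^2 + of_nat (card X)^2 * of_nat (card Y))
     + Cc * of_nat (card X) * of_nat (card Y)"
    by (rule sum4_delta[OF fX])
  finally show ?thesis .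
qed




lemma sum_pow_card:
  fixes x :: real
  shows "finite I \<Longrightarrow> (\<Sum>A\<in>Pow I. x ^ card A) = (x + 1) ^ card I"
proof (induction I rule: finite_induct)
  case empty then show ?case by simp
next
  case (insert a F)
  have fin: "finite (Pow F)" using insert by simp
  have disj: "Pow F \<inter> insert a ` Pow F = {}" using insert by auto
  have inj: "inj_on (insert a) (Pow F)" using insert by (auto simp: inj_on_def)
  have "(\<Sum>A\<in>Pow (insert a F). x ^ card A) = (\<Sum>A\<in>Pow F. x ^ card A) + (\<Sum>A\<in>insert a ` Pow F. x ^ card A)"
    unfolding Pow_insert by (rule sum.union_disjoint) (use fin disj in auto)
  also have "(\<Sum>A\<in>insert a ` Pow F. x ^ card A) = (\<Sum>A\<in>Pow F. x ^ card (insert a A))"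
    by (rule sum.reindex[OF inj, unfolded comp_def])
  also have "\<dots> = (\<Sum>A\<in>Pow F. x * x ^ card A)"
  proof (rule sum.cong[OF refl])
    fix A assume "A \<in> Pow F"
    then have "a \<notin> A" "finite A" using insert finite_subset by auto
    then show "x ^ card (insert a A) = x * x ^ card A" by simp
  qed
  finally show ?case using insert by (simp add: sum_distrib_left[symmetric] algebra_simps)
qed

definition propsub :: "'i set set" where "propsub = {A. A \<noteq> {} \<and> A \<noteq> UNIV}"

lemma propsub_eq: "(propsub :: 'i::finite set set) = Pow UNIV - {{}, UNIV}"
  unfolding propsub_def by auto

lemma sum_propsub:
  fixes f :: "'i::finite set \<Rightarrow> real"
  shows "(\<Sum>A\<in>propsub. f A) = (\<Sum>A\<in>Pow UNIV. f A) - f {} - f UNIV"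
proof -
  have ne: "({}::'i set) \<noteq> UNIV" by auto
  have "(\<Sum>A\<in>Pow UNIV. f A) = (\<Sum>A\<in>propsub. f A) + (\<Sum>A\<in>{{},UNIV}. f A)"
    unfolding propsub_eq by (rule sum.subset_diff) auto
  then show ?thesis using ne by simp
qed

lemma card_propsub: "(\<Sum>A\<in>(propsub::'i::finite set set). 1::real) = 2 ^ CARD('i) - 2"
  using sum_pow_card[of "UNIV::'i set" 1] unfolding sum_propsub by simp

lemma sum_compl_card:
  fixes x :: real
  shows "(\<Sum>A\<in>Pow (UNIV::'i::finite set). x ^ card (- A)) = (\<Sum>A\<in>Pow (UNIV::'i set). x ^ card A)"
  by (rule sum.reindex_bij_witness[of _ uminus uminus]) auto

lemma S1_eq:
  fixes d :: real
  shows "(\<Sum>A\<in>(propsub::'i::finite set set). d ^ card A + d ^ card (- A)) = 2 * ((d + 1) ^ CARD('i) - 1 - d ^ CARD('i))"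
  unfolding sum_propsub sum.distrib sum_compl_card sum_pow_card[OF finite_class.finite_UNIV] by simp


lemma purity_cont: "continuous_on UNIV (purity A)"
  unfolding purity_def by (intro continuous_intros)

lemma tau_cont: "continuous_on UNIV (tau_bip A)"
  unfolding tau_bip_def by (intro continuous_intros purity_cont[unfolded o_def] continuous_on_compose2[OF continuous_on_Re purity_cont]) auto

lemma card_X: "card (PiE A (\<lambda>_. UNIV::'d::finite set)) = CARD('d) ^ card (A::'i::finite set)"
  by (simp add: card_PiE)

lemma exp_tau:
  fixes nu :: "(complex^('i::finite \<Rightarrow> 'd::finite)) measure" and A :: "'i set"
  assumes sph: "sph nu" and d2: "CARD('d) \<ge> 2"
  defines "N \<equiv> CARD('i)" and "d \<equiv> real CARD('d)"
  defines "D \<equiv> d ^ N" and "t \<equiv> (\<integral>x. (cmod (\<Sum>p\<in>UNIV. (x $ p)^2))^2 \<partial>nu)"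
  shows "integral\<^sup>L nu (tau_bip A) = 2 * (1 - ((D - t) * (d ^ card A + d ^ card (- A)) + (D + 1) * t - 2) / (D^2 + D - 2))"
proof -
  have cf: "CARD('i \<Rightarrow> 'd) = CARD('d) ^ CARD('i)" using d2 by (simp add: card_fun)
  have Dr: "real CARD('i \<Rightarrow> 'd) = D" unfolding cf D_def d_def N_def by simp
  have d2': "d \<ge> 2" using d2 unfolding d_def by simp
  have "N \<ge> 1" unfolding N_def by (simp add: Suc_le_eq)
  then have "D \<ge> d" unfolding D_def using d2' by (metis one_le_power order.trans power_increasing power_one_right linorder_not_le not_less_iff_gr_or_eq d2' le_less_linear one_le_numeral order_less_le_trans)
  then have D2: "D \<ge> 2" using d2' by simp
  have card2: "CARD('i \<Rightarrow> 'd) \<ge> 2" using D2 Dr by linarith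
  have ca: "card A + card (- A) = N" unfolding N_def using card_Un_disjoint[of A "- A"] by simp
  define \<alpha> where "\<alpha> = d ^ card A"
  define \<beta> where "\<beta> = d ^ card (- A)"
  have ab: "\<alpha> * \<beta> = D" unfolding \<alpha>_def \<beta>_def D_def by (simp flip: power_add add: ca)
  have Dpos: "D * (D^2 + D - 2) > 0" by (rule denom_pos[OF D2])
  have pur: "Re (integral\<^sup>L nu (purity A)) = ((D - t) / (D * (D^2 + D - 2))) * (\<alpha> * \<beta>^2 + \<alpha>^2 * \<beta>)
      + (((D + 1) * t - 2) / (D * (D^2 + D - 2))) * \<alpha> * \<beta>"
    unfolding exp_purity[OF sph card2] card_X Dr t_def \<alpha>_def \<beta>_def d_def by simp
  also have "\<dots> = ((D - t) * (\<alpha> + \<beta>) + (D + 1) * t - 2) / (D^2 + D - 2)"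
  proof -
    have h1: "\<alpha> * \<beta>^2 + \<alpha>^2 * \<beta> = D * (\<alpha> + \<beta>)" using ab by (simp add: power2_eq_square algebra_simps)
    have h2: "x * \<alpha> * \<beta> = x * D" for x using ab by (simp add: mult.assoc)
    have nz: "D \<noteq> 0" "D^2 + D - 2 \<noteq> 0" using Dpos D2 by (auto simp: zero_less_mult_iff)
    have gen: "a / (D * E) * (D * b) + c / (D * E) * D = (a * b + c) / E" if "E \<noteq> 0" for a b c E :: real
      using that nz(1) by (simp add: field_simps)
    show ?thesis unfolding h1 h2 gen[OF nz(2)] by (simp add: algebra_simps)
  qed
  finally have pur': "Re (integral\<^sup>L nu (purity A)) = ((D - t) * (\<alpha> + \<beta>) + (D + 1) * t - 2) / (D^2 + D - 2)" .
  have ip: "integrable nu (purity A)" by (rule sph.integ[OF sph purity_cont])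
  have "integral\<^sup>L nu (tau_bip A) = (\<integral>x. 2 * (1 - Re (purity A x)) \<partial>nu)" unfolding tau_bip_def ..
  also have "\<dots> = 2 * (\<integral>x. 1 - Re (purity A x) \<partial>nu)" by (rule integral_mult_right_zero)
  also have "(\<integral>x. 1 - Re (purity A x) \<partial>nu) = (\<integral>x. 1 \<partial>nu) - (\<integral>x. Re (purity A x) \<partial>nu)"
  proof (rule Bochner_Integration.integral_diff)
    show "integrable nu (\<lambda>x. 1::real)"
      using prob_space.finite_measure[OF sph.prob[OF sph]] by (simp add: finite_measure.integrable_const)
    show "integrable nu (\<lambda>x. Re (purity A x))" using ip by (rule integrable_Re)
  qed
  also have "(\<integral>x. 1 \<partial>nu) = (1::real)" using prob_space.prob_space[OF sph.prob[OF sph]] by simp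
  also have "(\<integral>x. Re (purity A x) \<partial>nu) = Re (integral\<^sup>L nu (purity A))" by (rule integral_Re[OF ip])
  finally show ?thesis unfolding pur' \<alpha>_def \<beta>_def .
qed


lemma sum_aff:
  fixes u :: "'a \<Rightarrow> real"
  shows "(\<Sum>A\<in>P. 2 * (1 - (k * u A + c) / E)) = 2 * (\<Sum>A\<in>P. 1) - 2 * (k * (\<Sum>A\<in>P. u A) + (\<Sum>A\<in>P. 1) * c) / E"
  by (simp add: sum_subtractf sum.distrib sum_distrib_left[symmetric] sum_divide_distrib[symmetric] algebra_simps sum_distrib_right)

lemma exp_OT:
  fixes nu :: "(complex^('i::finite \<Rightarrow> 'd::finite)) measure"
  assumes sph: "sph nu" and d2: "CARD('d) \<ge> 2"
  defines "N \<equiv> CARD('i)" and "d \<equiv> real CARD('d)"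
  defines "D \<equiv> d ^ N" and "t \<equiv> (\<integral>x. (cmod (\<Sum>p\<in>UNIV. (x $ p)^2))^2 \<partial>nu)"
  shows "integral\<^sup>L nu one_tangle =
    ((2 * (2 ^ N - 2) - 2 * ((D - t) * (2 * ((d + 1) ^ N - 1 - D)) + (2 ^ N - 2) * ((D + 1) * t - 2)) / (D^2 + D - 2)) / 2)
      / (2 ^ (N - 1) - 1)"
proof -
  have ot: "(one_tangle :: complex^('i \<Rightarrow> 'd) \<Rightarrow> real) = (\<lambda>x. ((\<Sum>A\<in>(propsub::'i set set). tau_bip A x) / 2) / (2 ^ (N - 1) - 1))"
    unfolding one_tangle_def propsub_def N_def by (rule ext) simp
  have "integral\<^sup>L nu one_tangle = ((\<Sum>A\<in>propsub. integral\<^sup>L nu (tau_bip A)) / 2) / (2 ^ (N - 1) - 1)"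
    unfolding ot integral_divide_zero
    by (subst Bochner_Integration.integral_sum) (auto intro: sph.integ[OF sph tau_cont])
  also have "(\<Sum>A\<in>propsub. integral\<^sup>L nu (tau_bip A)) =
     (\<Sum>A\<in>(propsub::'i set set). 2 * (1 - ((D - t) * (d ^ card A + d ^ card (- A)) + ((D + 1) * t - 2)) / (D^2 + D - 2)))"
    unfolding exp_tau[OF sph d2] N_def d_def D_def t_def by (simp add: algebra_simps)
  also have "\<dots> = 2 * (2 ^ N - 2) - 2 * ((D - t) * (2 * ((d + 1) ^ N - 1 - D)) + (2 ^ N - 2) * ((D + 1) * t - 2)) / (D^2 + D - 2)"
    unfolding sum_aff card_propsub S1_eq N_def D_def ..
  finally show ?thesis .
qed




lemma meas_vec:
  fixes f :: "'a \<Rightarrow> 'b::euclidean_space^'n::finite"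
  assumes "\<And>i. (\<lambda>x. f x $ i) \<in> borel_measurable M"
  shows "f \<in> borel_measurable M"
proof (subst borel_measurable_euclidean_space, intro ballI)
  fix b :: "'b^'n" assume "b \<in> Basis"
  then obtain i u where b: "b = axis i u" "u \<in> Basis" unfolding Basis_vec_def by blast
  have "(\<lambda>x. (f x $ i) \<bullet> u) \<in> borel_measurable M"
    by (rule borel_measurable_inner[OF assms[of i] borel_measurable_const])
  then show "(\<lambda>x. f x \<bullet> b) \<in> borel_measurable M" unfolding b inner_axis .
qed

lemma norm_sq_real: "(norm (x::complex^'n::finite))^2 = (\<Sum>i\<in>UNIV. (cmod (x $ i))^2)"
  by (simp add: norm_vec_def L2_set_def sum_nonneg)

lemma ps_sum:
  fixes f :: "'i::finite \<Rightarrow> 'd::finite \<Rightarrow> 'c::comm_semiring_1"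
  shows "(\<Sum>x\<in>UNIV. \<Prod>i\<in>UNIV. f i (x i)) = (\<Prod>i\<in>UNIV. \<Sum>j\<in>UNIV. f i j)"
proof -
  have "PiE (UNIV::'i set) (\<lambda>_. UNIV::'d set) = UNIV" by (auto simp: PiE_def extensional_def)
  then show ?thesis using prod_sum_PiE[of "UNIV::'i set" "\<lambda>_. UNIV::'d set" f] by simp
qed

lemma ps_norm: "norm (prod_state \<phi>) = (\<Prod>i\<in>UNIV. norm (\<phi> i))"
proof -
  have "(norm (prod_state \<phi>))^2 = (\<Sum>x\<in>UNIV. \<Prod>i\<in>UNIV. (cmod (\<phi> i $ x i))^2)"
    unfolding norm_sq_real by (simp add: prod_state_def prod_norm[symmetric] prod_power_distrib)
  also have "\<dots> = (\<Prod>i\<in>UNIV. (norm (\<phi> i))^2)" unfolding norm_sq_real by (rule ps_sum)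
  also have "\<dots> = (\<Prod>i\<in>UNIV. norm (\<phi> i))^2" by (simp add: prod_power_distrib)
  finally show ?thesis by (simp add: power2_eq_iff_nonneg prod_nonneg)
qed

definition Tq :: "complex^'n::finite \<Rightarrow> real" where
  "Tq x = (cmod (\<Sum>p\<in>UNIV. (x $ p)^2))^2"

lemma Tq_cont: "continuous_on UNIV Tq"
  unfolding Tq_def by (intro continuous_intros)

lemma ps_Tq: "Tq (prod_state \<phi>) = (\<Prod>i\<in>UNIV. Tq (\<phi> i))"
proof -
  have "(\<Sum>x\<in>UNIV. (prod_state \<phi> $ x)^2) = (\<Sum>x\<in>UNIV. \<Prod>i\<in>UNIV. (\<phi> i $ x i)^2)"
    by (simp add: prod_state_def prod_power_distrib)
  also have "\<dots> = (\<Prod>i\<in>UNIV. \<Sum>j\<in>UNIV. (\<phi> i $ j)^2)" by (rule ps_sum)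
  finally show ?thesis unfolding Tq_def by (simp add: prod_norm[symmetric] prod_power_distrib)
qed

lemma ps_meas:
  fixes S :: "(complex^'d::finite) measure"
  assumes "sets S = sets borel"
  shows "(prod_state :: ('i::finite \<Rightarrow> complex^'d) \<Rightarrow> _) \<in> borel_measurable (PiM UNIV (\<lambda>_. S))"
proof (rule meas_vec)
  fix x :: "'i \<Rightarrow> 'd"
  have c: "(\<lambda>\<phi>. \<phi> i $ j) \<in> borel_measurable (PiM UNIV (\<lambda>_. S))" for i j
  proof -
    have n: "(\<lambda>v. v $ j) \<in> borel_measurable S"
      by (subst measurable_cong_sets[OF assms refl]) (rule borel_measurable_continuous_onI, intro continuous_intros)
    have m: "(\<lambda>\<phi>. \<phi> i) \<in> PiM UNIV (\<lambda>_. S) \<rightarrow>\<^sub>M S"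
      using measurable_component_singleton[of i UNIV "\<lambda>_. S"] by simp
    show ?thesis using measurable_compose[OF m n] .
  qed
  show "(\<lambda>\<phi>. prod_state \<phi> $ x) \<in> borel_measurable (PiM UNIV (\<lambda>_. S))"
    unfolding prod_state_def vec_lambda_beta by (rule borel_measurable_prod) (rule c)
qed




lemma fubini_swap:
  fixes MM :: "'m::euclidean_space measure" and P :: "'p measure"
    and G :: "'m \<Rightarrow> complex^'n::finite \<Rightarrow> complex^'n" and ps :: "'p \<Rightarrow> complex^'n"
    and f :: "complex^'n \<Rightarrow> real"
  assumes MM: "prob_space MM" "sets MM = sets borel" and P: "prob_space P"
    and G: "continuous_on UNIV (\<lambda>z. G (fst z) (snd z))"
    and psm: "ps \<in> borel_measurable P"
    and f: "continuous_on UNIV f"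
    and bd: "AE \<phi> in P. AE Q in MM. norm (G Q (ps \<phi>)) \<le> 1"
  shows "(\<integral>Q. (\<integral>\<phi>. f (G Q (ps \<phi>)) \<partial>P) \<partial>MM) = (\<integral>\<phi>. (\<integral>Q. f (G Q (ps \<phi>)) \<partial>MM) \<partial>P)"
    and "(\<lambda>\<phi>. \<integral>Q. f (G Q (ps \<phi>)) \<partial>MM) \<in> borel_measurable P"
proof -
  have sf: "sigma_finite_measure P" "sigma_finite_measure MM"
    using MM P by (auto intro: prob_space_imp_sigma_finite)
  have psf: "pair_sigma_finite P MM" unfolding pair_sigma_finite_def using sf by blast
  have snd_m: "(\<lambda>z. snd z) \<in> borel_measurable (P \<Otimes>\<^sub>M MM)"
    using measurable_snd measurable_cong_sets[OF refl MM(2)] by blast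
  have fst_m: "(\<lambda>z. ps (fst z)) \<in> borel_measurable (P \<Otimes>\<^sub>M MM)"
    by (rule measurable_compose[OF measurable_fst psm])
  have pr: "(\<lambda>z. (snd z, ps (fst z))) \<in> borel_measurable (P \<Otimes>\<^sub>M MM)"
    by (rule borel_measurable_Pair[OF snd_m fst_m])
  have Gm: "(\<lambda>z. G (snd z) (ps (fst z))) \<in> borel_measurable (P \<Otimes>\<^sub>M MM)"
    using borel_measurable_continuous_on[OF G pr] by simp
  have hm: "(\<lambda>z. f (G (snd z) (ps (fst z)))) \<in> borel_measurable (P \<Otimes>\<^sub>M MM)"
    using borel_measurable_continuous_on[OF f Gm] .
  obtain K where K: "\<forall>x. norm x \<le> 1 \<longrightarrow> norm (f x) \<le> K" using cont_bound[OF f] by blast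
  have nm: "(\<lambda>z. norm (G (snd z) (ps (fst z)))) \<in> borel_measurable (P \<Otimes>\<^sub>M MM)"
    using Gm by measurable
  have aeb: "AE z in P \<Otimes>\<^sub>M MM. norm (G (snd z) (ps (fst z))) \<le> 1"
  proof (rule pair_sigma_finite.AE_pair_measure[OF psf])
    show "{x \<in> space (P \<Otimes>\<^sub>M MM). norm (G (snd x) (ps (fst x))) \<le> 1} \<in> sets (P \<Otimes>\<^sub>M MM)"
      using borel_measurable_le[OF nm borel_measurable_const[of 1]] by simp
    show "AE x in P. AE y in MM. norm (G (snd (x, y)) (ps (fst (x, y)))) \<le> 1" using bd by simp
  qed
  have int: "integrable (P \<Otimes>\<^sub>M MM) (\<lambda>(x, y). f (G y (ps x)))"
  proof (rule finite_measure.integrable_const_bound[where B=K])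
    show "finite_measure (P \<Otimes>\<^sub>M MM)" using prob_space_pair[OF P MM(1)] by (rule prob_space.finite_measure)
    show "AE x in P \<Otimes>\<^sub>M MM. norm (case x of (x, y) \<Rightarrow> f (G y (ps x))) \<le> K"
      using aeb by (rule AE_mp) (use K in \<open>auto simp: split_beta\<close>)
    show "(\<lambda>(x, y). f (G y (ps x))) \<in> borel_measurable (P \<Otimes>\<^sub>M MM)" using hm by (simp add: split_beta)
  qed
  show "(\<integral>Q. (\<integral>\<phi>. f (G Q (ps \<phi>)) \<partial>P) \<partial>MM) = (\<integral>\<phi>. (\<integral>Q. f (G Q (ps \<phi>)) \<partial>MM) \<partial>P)"
    by (rule pair_sigma_finite.Fubini_integral[OF psf int])
  show "(\<lambda>\<phi>. \<integral>Q. f (G Q (ps \<phi>)) \<partial>MM) \<in> borel_measurable P"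
    using sigma_finite_measure.borel_measurable_lebesgue_integral[OF sf(2), of "\<lambda>x y. f (G y (ps x))" P] hm
    by (simp add: split_beta)
qed




lemma cmat_mult: "cmat A ** cmat B = cmat (A ** B)"
  by (simp add: cmat_def matrix_matrix_mult_def vec_eq_iff)

lemma cmat_vec_cont: "continuous_on UNIV (\<lambda>z. cmat (fst z) *v (snd z :: complex^'n::finite))"
proof -
  have e: "(\<lambda>z. cmat (fst z) *v (snd z :: complex^'n)) = (\<lambda>z. \<chi> i. \<Sum>j\<in>UNIV. complex_of_real (fst z $ i $ j) * snd z $ j)"
    by (rule ext) (simp add: vec_eq_iff cmat_vec_nth)
  show ?thesis unfolding e by (intro continuous_on_vec_lambda continuous_intros)
qed

lemma mvm_cont2: "continuous_on UNIV (\<lambda>z. fst z *v (snd z :: complex^'n::finite))"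
  unfolding matrix_vector_mult_def by (intro continuous_on_vec_lambda continuous_intros)

lemma cmat_vec_cont1: "continuous_on UNIV (\<lambda>Q. cmat Q *v (\<psi> :: complex^'n::finite))"
proof -
  have e: "(\<lambda>Q. cmat Q *v (\<psi> :: complex^'n)) = (\<lambda>Q. \<chi> i. \<Sum>j\<in>UNIV. complex_of_real (Q $ i $ j) * \<psi> $ j)"
    by (rule ext) (simp add: vec_eq_iff cmat_vec_nth)
  show ?thesis unfolding e by (intro continuous_on_vec_lambda continuous_intros)
qed

lemma mvm_cont1: "continuous_on UNIV (\<lambda>U. U *v (\<psi> :: complex^'n::finite))"
  unfolding matrix_vector_mult_def by (intro continuous_on_vec_lambda continuous_intros)

lemma mm_cont: "continuous_on UNIV (\<lambda>Q. (V::'a::real_normed_field^'n::finite^'n) ** Q)"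
  unfolding matrix_matrix_mult_def by (intro continuous_on_vec_lambda continuous_intros)

lemma sphere_sets: "{x \<in> space borel. norm (x::'a::euclidean_space) = 1} \<in> sets borel"
proof -
  have "closed {x::'a. norm x = 1}" using closed_sphere[of "0::'a" 1] by (simp add: sphere_def dist_norm)
  then show ?thesis by (simp add: borel_closed)
qed

lemma Tq_orth: "orthogonal_matrix Q \<Longrightarrow> Tq (cmat Q *v \<psi>) = Tq \<psi>"
  unfolding Tq_def power2_eq_square using orth_bilin[of Q \<psi> \<psi>] by simp

lemma sph_orth:
  fixes MO :: "(real^'n::finite^'n) measure" and \<psi> :: "complex^'n"
  assumes haar: "is_haar_orth MO" and u: "norm \<psi> = 1"
  shows "sph (distr MO borel (\<lambda>Q. cmat Q *v \<psi>))"
    and "(\<integral>x. Tq x \<partial>distr MO borel (\<lambda>Q. cmat Q *v \<psi>)) = Tq \<psi>"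
proof -
  have P: "prob_space MO" and sMO: "sets MO = sets borel" and ae: "AE Q in MO. orthogonal_matrix Q"
    and inv: "\<And>V. orthogonal_matrix V \<Longrightarrow> distr MO borel (\<lambda>Q. V ** Q) = MO"
    using haar unfolding is_haar_orth_def by auto
  let ?g = "\<lambda>Q. cmat Q *v \<psi>"
  have gb: "?g \<in> borel_measurable borel" by (rule borel_measurable_continuous_onI[OF cmat_vec_cont1])
  have gm: "?g \<in> MO \<rightarrow>\<^sub>M borel" using gb measurable_cong_sets[OF sMO refl] by blast
  have prob: "prob_space (distr MO borel ?g)" by (rule prob_space.prob_space_distr[OF P gm])
  have sets: "sets (distr MO borel ?g) = sets borel" by simp
  have unit: "AE x in distr MO borel ?g. norm x = 1"
    using AE_distr_iff[OF gm sphere_sets] ae by (auto elim!: AE_mp simp: orth_norm u)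
  have oinv: "distr (distr MO borel ?g) borel (\<lambda>x. cmat V *v x) = distr MO borel ?g" if V: "orthogonal_matrix V" for V
  proof -
    have Tb: "(\<lambda>x. cmat V *v x) \<in> borel \<rightarrow>\<^sub>M borel" by (rule mvm_meas)
    have hb: "(\<lambda>Q. V ** Q) \<in> borel \<rightarrow>\<^sub>M borel" by (rule borel_measurable_continuous_onI[OF mm_cont])
    have hm: "(\<lambda>Q. V ** Q) \<in> MO \<rightarrow>\<^sub>M borel" using hb measurable_cong_sets[OF sMO refl] by blast
    have "distr (distr MO borel ?g) borel (\<lambda>x. cmat V *v x) = distr MO borel ((\<lambda>x. cmat V *v x) \<circ> ?g)"
      by (rule distr_distr[OF Tb gm])
    also have "(\<lambda>x. cmat V *v x) \<circ> ?g = ?g \<circ> (\<lambda>Q. V ** Q)"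
      by (rule ext) (simp add: matrix_vector_mul_assoc cmat_mult)
    also have "distr MO borel (?g \<circ> (\<lambda>Q. V ** Q)) = distr (distr MO borel (\<lambda>Q. V ** Q)) borel ?g"
      by (rule distr_distr[OF gb hm, symmetric])
    also have "\<dots> = distr MO borel ?g" unfolding inv[OF V] ..
    finally show ?thesis .
  qed
  show "sph (distr MO borel ?g)" by (rule sph.intro[OF prob sets unit oinv])
  have Tqb: "Tq \<in> borel_measurable borel" by (rule borel_measurable_continuous_onI[OF Tq_cont])
  have "(\<integral>x. Tq x \<partial>distr MO borel ?g) = (\<integral>Q. Tq (?g Q) \<partial>MO)" by (rule integral_distr[OF gm Tqb])
  also have "\<dots> = (\<integral>Q. Tq \<psi> \<partial>MO)"
  proof (rule integral_cong_AE)
    show "(\<lambda>Q. Tq (?g Q)) \<in> borel_measurable MO" using measurable_compose[OF gm Tqb] .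
    show "(\<lambda>Q. Tq \<psi>) \<in> borel_measurable MO" by simp
    show "AE Q in MO. Tq (?g Q) = Tq \<psi>" using ae by (rule AE_mp) (simp add: Tq_orth)
  qed
  also have "\<dots> = Tq \<psi>" using prob_space.prob_space[OF P] by simp
  finally show "(\<integral>x. Tq x \<partial>distr MO borel ?g) = Tq \<psi>" .
qed

lemma usph_unit:
  fixes MU :: "(complex^'n::finite^'n) measure" and \<psi> :: "complex^'n"
  assumes haar: "is_haar_unitary MU" and u: "norm \<psi> = 1"
  shows "usph (distr MU borel (\<lambda>U. U *v \<psi>))"
proof -
  have P: "prob_space MU" and sMU: "sets MU = sets borel" and ae: "AE U in MU. unitary_mat U"
    and inv: "\<And>V. unitary_mat V \<Longrightarrow> distr MU borel (\<lambda>U. V ** U) = MU"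
    using haar unfolding is_haar_unitary_def by auto
  let ?g = "\<lambda>U. U *v \<psi>"
  have gb: "?g \<in> borel_measurable borel" by (rule borel_measurable_continuous_onI[OF mvm_cont1])
  have gm: "?g \<in> MU \<rightarrow>\<^sub>M borel" using gb measurable_cong_sets[OF sMU refl] by blast
  have prob: "prob_space (distr MU borel ?g)" by (rule prob_space.prob_space_distr[OF P gm])
  have sets: "sets (distr MU borel ?g) = sets borel" by simp
  have unit: "AE x in distr MU borel ?g. norm x = 1"
    using AE_distr_iff[OF gm sphere_sets] ae by (auto elim!: AE_mp simp: unit_norm u)
  have uinv: "distr (distr MU borel ?g) borel (\<lambda>x. V *v x) = distr MU borel ?g" if V: "unitary_mat V" for V
  proof -
    have Tb: "(\<lambda>x. V *v x) \<in> borel \<rightarrow>\<^sub>M borel" by (rule mvm_meas)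
    have hb: "(\<lambda>Q. V ** Q) \<in> borel \<rightarrow>\<^sub>M borel" by (rule borel_measurable_continuous_onI[OF mm_cont])
    have hm: "(\<lambda>Q. V ** Q) \<in> MU \<rightarrow>\<^sub>M borel" using hb measurable_cong_sets[OF sMU refl] by blast
    have "distr (distr MU borel ?g) borel (\<lambda>x. V *v x) = distr MU borel ((\<lambda>x. V *v x) \<circ> ?g)"
      by (rule distr_distr[OF Tb gm])
    also have "(\<lambda>x. V *v x) \<circ> ?g = ?g \<circ> (\<lambda>Q. V ** Q)"
      by (rule ext) (simp add: matrix_vector_mul_assoc)
    also have "distr MU borel (?g \<circ> (\<lambda>Q. V ** Q)) = distr (distr MU borel (\<lambda>Q. V ** Q)) borel ?g"
      by (rule distr_distr[OF gb hm, symmetric])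
    also have "\<dots> = distr MU borel ?g" unfolding inv[OF V] ..
    finally show ?thesis .
  qed
  show ?thesis by (rule usph.intro[OF prob sets unit uinv])
qed




definition Fexp :: "nat \<Rightarrow> real \<Rightarrow> real \<Rightarrow> real" where
  "Fexp N d t = ((2 * (2 ^ N - 2) - 2 * ((d ^ N - t) * (2 * ((d + 1) ^ N - 1 - d ^ N)) + (2 ^ N - 2) * ((d ^ N + 1) * t - 2))
      / ((d ^ N)^2 + d ^ N - 2)) / 2) / (2 ^ (N - 1) - 1)"

lemma usph_sph: "usph nu \<Longrightarrow> sph nu"
  by (rule sph.intro[OF usph.prob usph.sets_nu usph.unit usph.uinv[OF _ orth_unitary]])

lemma one_tangle_cont: "continuous_on UNIV (one_tangle :: complex^('i::finite \<Rightarrow> 'd::finite) \<Rightarrow> real)"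
proof -
  have e: "(one_tangle :: complex^('i \<Rightarrow> 'd) \<Rightarrow> real) = (\<lambda>x. (\<Sum>A\<in>{A. A \<noteq> {} \<and> A \<noteq> (UNIV::'i set)}. tau_bip A x) * (1 / 2 / (2 ^ (CARD('i) - 1) - 1)))"
    by (rule ext) (simp add: one_tangle_def)
  show ?thesis unfolding e by (intro continuous_intros tau_cont)
qed

lemma inner_O:
  fixes MO :: "(real^('i::finite \<Rightarrow> 'd::finite)^('i \<Rightarrow> 'd)) measure" and \<psi> :: "complex^('i \<Rightarrow> 'd)"
  assumes haar: "is_haar_orth MO" and u: "norm \<psi> = 1" and d2: "CARD('d) \<ge> 2"
  shows "(\<integral>Q. one_tangle (cmat Q *v \<psi>) \<partial>MO) = Fexp CARD('i) (real CARD('d)) (Tq \<psi>)"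
proof -
  have sMO: "sets MO = sets borel" using haar unfolding is_haar_orth_def by auto
  have gm: "(\<lambda>Q. cmat Q *v \<psi>) \<in> MO \<rightarrow>\<^sub>M borel"
    using borel_measurable_continuous_onI[OF cmat_vec_cont1] measurable_cong_sets[OF sMO refl] by blast
  have "(\<integral>Q. one_tangle (cmat Q *v \<psi>) \<partial>MO) = integral\<^sup>L (distr MO borel (\<lambda>Q. cmat Q *v \<psi>)) one_tangle"
    by (rule integral_distr[OF gm borel_measurable_continuous_onI[OF one_tangle_cont], symmetric])
  also have "\<dots> = Fexp CARD('i) (real CARD('d)) (\<integral>x. Tq x \<partial>distr MO borel (\<lambda>Q. cmat Q *v \<psi>))"
    unfolding exp_OT[OF sph_orth(1)[OF haar u] d2] Fexp_def Tq_def ..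
  also have "\<dots> = Fexp CARD('i) (real CARD('d)) (Tq \<psi>)" unfolding sph_orth(2)[OF haar u] ..
  finally show ?thesis .
qed

lemma inner_U:
  fixes MU :: "(complex^('i::finite \<Rightarrow> 'd::finite)^('i \<Rightarrow> 'd)) measure" and \<psi> :: "complex^('i \<Rightarrow> 'd)"
  assumes haar: "is_haar_unitary MU" and u: "norm \<psi> = 1" and d2: "CARD('d) \<ge> 2"
  shows "(\<integral>U. one_tangle (U *v \<psi>) \<partial>MU) = Fexp CARD('i) (real CARD('d)) (2 / (real CARD('d) ^ CARD('i) + 1))"
proof -
  have sMU: "sets MU = sets borel" using haar unfolding is_haar_unitary_def by auto
  have gm: "(\<lambda>U. U *v \<psi>) \<in> MU \<rightarrow>\<^sub>M borel"
    using borel_measurable_continuous_onI[OF mvm_cont1] measurable_cong_sets[OF sMU refl] by blast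
  have us: "usph (distr MU borel (\<lambda>U. U *v \<psi>))" by (rule usph_unit[OF haar u])
  have cf: "CARD('i \<Rightarrow> 'd) = CARD('d) ^ CARD('i)" using d2 by (simp add: card_fun)
  have c2: "CARD('i \<Rightarrow> 'd) \<ge> 2"
  proof -
    have "CARD('d) ^ 1 \<le> CARD('d) ^ CARD('i)" using d2 by (intro power_increasing) (auto simp: Suc_le_eq)
    then show ?thesis using d2 cf by simp
  qed
  have "(\<integral>U. one_tangle (U *v \<psi>) \<partial>MU) = integral\<^sup>L (distr MU borel (\<lambda>U. U *v \<psi>)) one_tangle"
    by (rule integral_distr[OF gm borel_measurable_continuous_onI[OF one_tangle_cont], symmetric])
  also have "\<dots> = Fexp CARD('i) (real CARD('d)) (\<integral>x. Tq x \<partial>distr MU borel (\<lambda>U. U *v \<psi>))"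
    unfolding exp_OT[OF usph_sph[OF us] d2] Fexp_def Tq_def ..
  also have "(\<integral>x. Tq x \<partial>distr MU borel (\<lambda>U. U *v \<psi>)) = 2 / (real CARD('d) ^ CARD('i) + 1)"
    unfolding Tq_def usph.t_unitary[OF us c2] cf by simp
  finally show ?thesis .
qed

lemma Fexp_affine:
  assumes "d \<ge> 2" "N \<ge> 2"
  shows "Fexp N d t = Fexp N d 0 + (Fexp N d 1 - Fexp N d 0) * t"
proof -
  have "d ^ 1 \<le> d ^ N" using assms by (intro power_increasing) auto
  then have D2: "d ^ N \<ge> 2" using assms by simp
  have Ep: "(d ^ N)^2 + d ^ N - 2 \<noteq> 0" using denom_pos[OF D2] by auto
  have "(2::real) ^ 1 \<le> 2 ^ (N - 1)" using assms by (intro power_increasing) auto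
  then have K: "(2::real) ^ (N - 1) - 1 \<noteq> 0" by simp
  have gen: "((c1 - 2 * ((D - t) * c2 + c3 * ((D + 1) * t - 2)) / E) / 2) / K
    = ((c1 - 2 * ((D - 0) * c2 + c3 * ((D + 1) * 0 - 2)) / E) / 2) / K +
      (((c1 - 2 * ((D - 1) * c2 + c3 * ((D + 1) * 1 - 2)) / E) / 2) / K - ((c1 - 2 * ((D - 0) * c2 + c3 * ((D + 1) * 0 - 2)) / E) / 2) / K) * t"
    if "E \<noteq> 0" "K \<noteq> 0" for c1 c2 c3 D E K :: real
    using that by (simp add: field_simps)
  show ?thesis unfolding Fexp_def by (rule gen[OF Ep K])
qed

lemma algO:
  fixes D M E K Ep :: real
  assumes "E \<noteq> 0" "Ep \<noteq> 0" "K \<noteq> 0"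
  shows "((2*(M-2) - 2*((D - M/E)*(2*(E - 1 - D)) + (M-2)*((D+1)*(M/E) - 2))/Ep)/2)/K
     = ((M-2)*Ep*E - ((D*E - M)*(2*(E-1-D)) + (M-2)*((D+1)*M - 2*E)))/(Ep*E*K)"
proof -
  have a: "D - M/E = (D*E - M)/E" "(D+1)*(M/E) - 2 = ((D+1)*M - 2*E)/E" using assms by (auto simp: field_simps)
  have b: "(D*E - M)/E*(2*(E - 1 - D)) + (M-2)*(((D+1)*M - 2*E)/E) = ((D*E - M)*(2*(E-1-D)) + (M-2)*((D+1)*M - 2*E))/E"
    by (simp add: add_divide_distrib)
  show ?thesis unfolding a b using assms by (simp add: divide_simps)
qed

lemma algO2:
  fixes D M E :: real
  shows "(M-2)*(D^2+D-2)*E - ((D*E - M)*(2*(E-1-D)) + (M-2)*((D+1)*M - 2*E)) = (M*(D+1) - 2*E)*(D*E - M)"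
  by algebra

lemma algU:
  fixes D M E K :: real
  assumes "D \<ge> 2" "K \<noteq> 0"
  shows "((2*(M-2) - 2*((D - 2/(D+1))*(2*(E - 1 - D)) + (M-2)*((D+1)*(2/(D+1)) - 2))/(D^2+D-2))/2)/K
     = (M*(D+1) - 2*E)/(K*(D+1))"
proof -
  have Ep: "D^2+D-2 \<noteq> 0" using denom_pos[OF assms(1)] by auto
  have D1: "D + 1 \<noteq> 0" using assms by simp
  have a: "D - 2/(D+1) = (D^2+D-2)/(D+1)" "(D+1)*(2/(D+1)) - 2 = 0" using D1 by (auto simp: field_simps power2_eq_square)
  have b0: "2 * (P/(D+1)*X + (M-2)*0) / P = 2*(X/(D+1))" if "P \<noteq> 0" for P X :: real using that by simp
  note b = b0[OF Ep, of "2*(E - 1 - D)"]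
  have c1: "(2*(M-2) - 2*(2*(E - 1 - D)/(D+1)))/2 = (M-2) - 2*(E - 1 - D)/(D+1)" by simp
  have c2: "(M-2) - 2*(E - 1 - D)/(D+1) = ((M-2)*(D+1) - 2*(E - 1 - D))/(D+1)" using D1 by (simp add: diff_divide_distrib)
  have c: "((2*(M-2) - 2*(2*(E - 1 - D)/(D+1)))/2)/K = ((M-2)*(D+1) - 2*(E - 1 - D))/(K*(D+1))"
    unfolding c1 c2 by (simp add: mult.commute)
  have d: "(M-2)*(D+1) - 2*(E - 1 - D) = M*(D+1) - 2*E" by (simp add: algebra_simps)
  show ?thesis unfolding a b c d ..
qed




lemma integral_affine:
  assumes "prob_space M" "integrable M T"
  shows "(\<integral>x. a + b * T x \<partial>M) = a + b * integral\<^sup>L M (T :: _ \<Rightarrow> real)"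
proof -
  have "(\<integral>x. a + b * T x \<partial>M) = (\<integral>x. a \<partial>M) + (\<integral>x. b * T x \<partial>M)"
    by (rule Bochner_Integration.integral_add)
      (use assms in \<open>auto simp: prob_space.finite_measure finite_measure.integrable_const\<close>)
  then show ?thesis using prob_space.prob_space[OF assms(1)] by simp
qed

theorem mainTheorem11:
  fixes S :: "(complex^'d::finite) measure"
    and MU :: "(complex^('i::finite \<Rightarrow> 'd)^('i \<Rightarrow> 'd)) measure"
    and MO :: "(real^('i \<Rightarrow> 'd)^('i \<Rightarrow> 'd)) measure"
  assumes "CARD('i) \<ge> 2" and "CARD('d) \<ge> 2"
    and "is_unif_sphere S" and "is_haar_orth MO" and "is_haar_unitary MU"
  shows "(\<integral>Q. ent_power S (cmat Q) \<partial>MO) =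
           ((2 ^ CARD('i) * (real CARD('d) ^ CARD('i) + 1) - 2 * (real CARD('d) + 1) ^ CARD('i))
             * (real CARD('d) ^ CARD('i) * (real CARD('d) + 1) ^ CARD('i) - 2 ^ CARD('i)))
           / ((2 ^ (CARD('i) - 1) - 1)
              * (real CARD('d) ^ (2 * CARD('i)) + real CARD('d) ^ CARD('i) - 2)
              * (real CARD('d) + 1) ^ CARD('i)) \<and>
         (\<integral>U. ent_power S U \<partial>MU) =
           (2 ^ CARD('i) * (real CARD('d) ^ CARD('i) + 1) - 2 * (real CARD('d) + 1) ^ CARD('i))
           / ((2 ^ (CARD('i) - 1) - 1) * (real CARD('d) ^ CARD('i) + 1))"
proof -
  note N2 = assms(1) and d2 = assms(2)
  define N where "N = CARD('i)"
  define d where "d = real CARD('d)"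
  define D where "D = d ^ N"
  define M where "M = (2::real) ^ N"
  define E where "E = (d + 1) ^ N"
  define K where "K = (2::real) ^ (N - 1) - 1"
  have d2': "d \<ge> 2" using d2 unfolding d_def by simp
  have "d ^ 1 \<le> d ^ N" using d2' N2 unfolding N_def by (intro power_increasing) auto
  then have D2: "D \<ge> 2" using d2' unfolding D_def by simp
  have "(2::real) ^ 1 \<le> 2 ^ (N - 1)" using N2 unfolding N_def by (intro power_increasing) auto
  then have Knz: "K \<noteq> 0" unfolding K_def by simp
  have Enz: "E \<noteq> 0" unfolding E_def using d2' by simp
  have Epnz: "D^2 + D - 2 \<noteq> 0" using denom_pos[OF D2] by auto
  have SU: "usph S" using assms(3) unfolding is_unif_sphere_def by (intro usph.intro) auto
  have sS: "sets S = sets borel" using assms(3) unfolding is_unif_sphere_def by auto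
  let ?P = "PiM (UNIV::'i set) (\<lambda>_. S)"
  have PP: "prob_space ?P" by (rule prob_space_PiM) (rule usph.prob[OF SU])
  have psm: "(prod_state :: ('i \<Rightarrow> complex^'d) \<Rightarrow> _) \<in> borel_measurable ?P" by (rule ps_meas[OF sS])
  have aeu: "AE \<phi> in ?P. norm (prod_state \<phi>) = 1"
  proof -
    have "AE \<phi> in ?P. \<forall>i\<in>UNIV. norm (\<phi> i) = 1"
      by (rule AE_finite_allI) (auto intro!: AE_PiM_component usph.prob[OF SU] usph.unit[OF SU])
    then show ?thesis by (rule AE_mp) (auto simp: ps_norm)
  qed
  have Tqm: "(\<lambda>\<phi>. Tq (prod_state \<phi>)) \<in> borel_measurable ?P"
    by (rule borel_measurable_continuous_on[OF Tq_cont psm])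
  have ITq: "(\<integral>\<phi>. Tq (prod_state \<phi>) \<partial>?P) = M / E"
  proof -
    have psf: "product_sigma_finite (\<lambda>_::'i. S)"
      unfolding product_sigma_finite_def using prob_space_imp_sigma_finite[OF usph.prob[OF SU]] by simp
    have iS: "integrable S Tq" by (rule sph.integ[OF usph_sph[OF SU] Tq_cont])
    have "(\<integral>\<phi>. Tq (prod_state \<phi>) \<partial>?P) = (\<integral>\<phi>. (\<Prod>i\<in>UNIV. Tq (\<phi> i)) \<partial>?P)" unfolding ps_Tq ..
    also have "\<dots> = (\<Prod>i\<in>(UNIV::'i set). integral\<^sup>L S Tq)"
      by (rule product_sigma_finite.product_integral_prod[OF psf]) (auto intro: iS)
    also have "integral\<^sup>L S Tq = 2 / (d + 1)" unfolding Tq_def usph.t_unitary[OF SU d2] d_def ..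
    finally show ?thesis unfolding M_def E_def N_def by (simp add: power_divide)
  qed
  have iTq: "integrable ?P (\<lambda>\<phi>. Tq (prod_state \<phi>))"
  proof -
    obtain B where B: "\<forall>x::complex^('i \<Rightarrow> 'd). norm x \<le> 1 \<longrightarrow> norm (Tq x) \<le> B" using cont_bound[OF Tq_cont] by blast
    have "AE \<phi> in ?P. norm (Tq (prod_state \<phi>)) \<le> B"
      using aeu
    proof (rule AE_mp, intro AE_I2 impI)
      fix \<phi> :: "'i \<Rightarrow> complex^'d" assume "norm (prod_state \<phi>) = 1"
      then show "norm (Tq (prod_state \<phi>)) \<le> B" using B by (metis order_refl)
    qed
    then show ?thesis
      by (rule finite_measure.integrable_const_bound[OF prob_space.finite_measure[OF PP] _ Tqm])
  qed
  have MOp: "prob_space MO" "sets MO = sets borel" and aeO: "AE Q in MO. orthogonal_matrix Q"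
    using assms(4) unfolding is_haar_orth_def by auto
  have bdO: "AE \<phi> in ?P. AE Q in MO. norm (cmat Q *v prod_state \<phi>) \<le> 1"
  proof -
    have "AE \<phi> in ?P. norm (prod_state \<phi>) = 1 \<longrightarrow> (AE Q in MO. norm (cmat Q *v prod_state \<phi>) \<le> 1)"
    proof (rule AE_I2, rule impI)
      fix \<phi> :: "'i \<Rightarrow> complex^'d" assume u: "norm (prod_state \<phi>) = 1"
      show "AE Q in MO. norm (cmat Q *v prod_state \<phi>) \<le> 1"
        using aeO by (rule AE_mp) (auto intro!: AE_I2 simp: orth_norm u)
    qed
    with aeu show ?thesis by (rule AE_mp)
  qed
  note fubO = fubini_swap[OF MOp PP cmat_vec_cont psm one_tangle_cont bdO]
  have O: "(\<integral>Q. ent_power S (cmat Q) \<partial>MO) = Fexp N d (M / E)"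
  proof -
    define a0 where "a0 = Fexp N d 0"
    define a1 where "a1 = Fexp N d 1 - Fexp N d 0"
    have aff: "Fexp N d t = a0 + a1 * t" for t
      unfolding a0_def a1_def using Fexp_affine[OF d2', of N t] N2 unfolding N_def by simp
    have "(\<integral>Q. ent_power S (cmat Q) \<partial>MO) = (\<integral>Q. (\<integral>\<phi>. one_tangle (cmat Q *v prod_state \<phi>) \<partial>?P) \<partial>MO)"
      unfolding ent_power_def ..
    also have "\<dots> = (\<integral>\<phi>. (\<integral>Q. one_tangle (cmat Q *v prod_state \<phi>) \<partial>MO) \<partial>?P)" by (rule fubO(1))
    also have "\<dots> = (\<integral>\<phi>. Fexp N d (Tq (prod_state \<phi>)) \<partial>?P)"
    proof (rule integral_cong_AE)
      show "(\<lambda>\<phi>. \<integral>Q. one_tangle (cmat Q *v prod_state \<phi>) \<partial>MO) \<in> borel_measurable ?P" by (rule fubO(2))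
      show "(\<lambda>\<phi>. Fexp N d (Tq (prod_state \<phi>))) \<in> borel_measurable ?P"
        unfolding aff using Tqm by simp
      show "AE \<phi> in ?P. (\<integral>Q. one_tangle (cmat Q *v prod_state \<phi>) \<partial>MO) = Fexp N d (Tq (prod_state \<phi>))"
        using aeu by (rule AE_mp) (auto simp: inner_O[OF assms(4) _ d2] N_def d_def)
    qed
    also have "\<dots> = (\<integral>\<phi>. a0 + a1 * Tq (prod_state \<phi>) \<partial>?P)"
      unfolding aff ..
    also have "\<dots> = a0 + a1 * (M / E)"
      unfolding integral_affine[OF PP iTq] ITq ..
    also have "\<dots> = Fexp N d (M / E)" unfolding aff ..
    finally show ?thesis .
  qed
  have MUp: "prob_space MU" "sets MU = sets borel" and aeU: "AE U in MU. unitary_mat U"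
    using assms(5) unfolding is_haar_unitary_def by auto
  have bdU: "AE \<phi> in ?P. AE U in MU. norm (U *v prod_state \<phi>) \<le> 1"
  proof -
    have "AE \<phi> in ?P. norm (prod_state \<phi>) = 1 \<longrightarrow> (AE U in MU. norm (U *v prod_state \<phi>) \<le> 1)"
    proof (rule AE_I2, rule impI)
      fix \<phi> :: "'i \<Rightarrow> complex^'d" assume u: "norm (prod_state \<phi>) = 1"
      show "AE U in MU. norm (U *v prod_state \<phi>) \<le> 1"
        using aeU by (rule AE_mp) (auto intro!: AE_I2 simp: unit_norm u)
    qed
    with aeu show ?thesis by (rule AE_mp)
  qed
  note fubU = fubini_swap[OF MUp PP mvm_cont2 psm one_tangle_cont bdU]
  have U: "(\<integral>U. ent_power S U \<partial>MU) = Fexp N d (2 / (D + 1))"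
  proof -
    have "(\<integral>U. ent_power S U \<partial>MU) = (\<integral>U. (\<integral>\<phi>. one_tangle (U *v prod_state \<phi>) \<partial>?P) \<partial>MU)"
      unfolding ent_power_def ..
    also have "\<dots> = (\<integral>\<phi>. (\<integral>U. one_tangle (U *v prod_state \<phi>) \<partial>MU) \<partial>?P)" by (rule fubU(1))
    also have "\<dots> = (\<integral>\<phi>. Fexp N d (2 / (D + 1)) \<partial>?P)"
    proof (rule integral_cong_AE)
      show "(\<lambda>\<phi>. \<integral>U. one_tangle (U *v prod_state \<phi>) \<partial>MU) \<in> borel_measurable ?P" by (rule fubU(2))
      show "(\<lambda>\<phi>. Fexp N d (2 / (D + 1))) \<in> borel_measurable ?P" by simp
      show "AE \<phi> in ?P. (\<integral>U. one_tangle (U *v prod_state \<phi>) \<partial>MU) = Fexp N d (2 / (D + 1))"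
        using aeu by (rule AE_mp) (auto simp: inner_U[OF assms(5) _ d2] N_def d_def D_def)
    qed
    also have "\<dots> = Fexp N d (2 / (D + 1))" using prob_space.prob_space[OF PP] by simp
    finally show ?thesis .
  qed
  have FO: "Fexp N d (M / E) = ((M * (D + 1) - 2 * E) * (D * E - M)) / (K * (D^2 + D - 2) * E)"
  proof -
    have "Fexp N d (M / E) = ((2*(M-2) - 2*((D - M/E)*(2*(E - 1 - D)) + (M-2)*((D+1)*(M/E) - 2))/(D^2+D-2))/2)/K"
      unfolding Fexp_def M_def E_def D_def K_def ..
    also have "\<dots> = ((M-2)*(D^2+D-2)*E - ((D*E - M)*(2*(E-1-D)) + (M-2)*((D+1)*M - 2*E)))/((D^2+D-2)*E*K)"
      by (rule algO[OF Enz Epnz Knz])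
    also have "\<dots> = ((M * (D + 1) - 2 * E) * (D * E - M)) / (K * (D^2 + D - 2) * E)"
      unfolding algO2 by (simp add: mult_ac)
    finally show ?thesis .
  qed
  have FU: "Fexp N d (2 / (D + 1)) = (M * (D + 1) - 2 * E) / (K * (D + 1))"
  proof -
    have "Fexp N d (2 / (D + 1)) = ((2*(M-2) - 2*((D - 2/(D+1))*(2*(E - 1 - D)) + (M-2)*((D+1)*(2/(D+1)) - 2))/(D^2+D-2))/2)/K"
      unfolding Fexp_def M_def E_def D_def K_def ..
    also have "\<dots> = (M*(D+1) - 2*E)/(K*(D+1))" by (rule algU[OF D2 Knz])
    finally show ?thesis .
  qed
  have D2N: "real CARD('d) ^ (2 * CARD('i)) = D^2" unfolding D_def d_def N_def by (simp add: power_mult[symmetric] mult.commute)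
  show ?thesis
    unfolding O U FO FU D2N
    unfolding D_def M_def E_def K_def N_def d_def
    by (simp add: mult_ac)
qed


end
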